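(* Let $\sigma>0$ and let $(n_k)$ be a strictly increasing sequence of positive integers. For any $H\in(\tfrac12,H_c)$ there exists $\varepsilon>0$ such that $$P(|\widehat{\mathcal{Y}}^H_{n_k}|>g^H_{n_k}(1-\varepsilon)\ \text{ult.})=0,$$ and for any $H\in(H_c,1)$ there exists $\delta>0$ such that $$P(|\widehat{\mathcal{Y}}^H_{n_k}|>g^H_{n_k}(1+\delta)\ \text{i.o.})=1.$$
   Context: For $h\in(\frac12,\frac34)$ let $\rho_h(k)=\frac12((k+1)^{2h}+(k-1)^{2h}-2k^{2h})$. Let $h_c\in(\frac12,\frac34)$ be such that $\sum_{k\ge1}\rho_h^2(k)<\frac14$ for all $h\in(\frac12,h_c)$ and $\sum_{k\ge1}\rho_h^2(k)>\frac14$ for all $h\in(h_c,\frac34)$ (such $h_c$ exists), and $H_c=2h_c-\frac12$. For $H\in(\frac12,1)$: $c_H=\sqrt{\frac{2H\,\Gamma(\frac32-H)}{\Gamma(H+\frac12)\Gamma(2-2H)}}$, $C_H=c_H(H-\frac12)$; for $1\le i<n$, $j_n^H(i)=\sigma C_H\int_{i-1}^i x^{\frac12-H}\Big(\int_0^1(v+n-1)^{H-\frac12}(v+n-1-x)^{H-\frac32}dv\Big)dx$; $g_n^H=\sigma C_H\int_{n-1}^n x^{\frac12-H}(n-x)^{H-\frac12}\Big(\int_0^1(y(n-x)+x)^{H-\frac12}y^{H-\frac32}dy\Big)dx$. For $n\ge2$, $x_n=n-1-\Big(\big(1+\frac1{n-1}\big)^{\frac2{3-2H}}-1\Big)^{-1}$,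 $i_n=\lfloor x_n\rfloor+1$. With $(\xi_i)$ i.i.d., $P(\xi_i=\pm1)=\frac12$, $\widehat{\mathcal{Y}}_n^H=\sum_{i=i_n}^{n-1}j_n^H(i)\xi_i$. For events $A_k$: $\{A_k\ \text{i.o.}\}=\bigcap_{m}\bigcup_{k\ge m}A_k$, $\{A_k\ \text{ult.}\}=\bigcup_m\bigcap_{k\ge m}A_k$. *)

theory Defs
  imports "HOL-Probability.Probability"
begin

definition rho :: "real \<Rightarrow> nat \<Rightarrow> real" where
  "rho h k = ((real k + 1) powr (2*h) + (real k - 1) powr (2*h) - 2 * real k powr (2*h)) / 2"

definition is_hc :: "real \<Rightarrow> bool" where
  "is_hc hc \<longleftrightarrow> 1/2 < hc \<and> hc < 3/4 \<and>
     (\<forall>h. 1/2 < h \<and> h < hc \<longrightarrow> (\<Sum>k. (rho h (Suc k))\<^sup>2) < 1/4) \<and>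
     (\<forall>h. hc < h \<and> h < 3/4 \<longrightarrow> (\<Sum>k. (rho h (Suc k))\<^sup>2) > 1/4)"

definition cH :: "real \<Rightarrow> real" where
  "cH H = sqrt (2 * H * Gamma (3/2 - H) / (Gamma (H + 1/2) * Gamma (2 - 2*H)))"

definition CH :: "real \<Rightarrow> real" where
  "CH H = cH H * (H - 1/2)"

definition jH :: "real \<Rightarrow> real \<Rightarrow> nat \<Rightarrow> nat \<Rightarrow> real" where
  "jH \<sigma> H n i = \<sigma> * CH H *
     (LBINT x = real i - 1..real i. x powr (1/2 - H) *
        (LBINT v = 0..1. (v + real n - 1) powr (H - 1/2) * (v + real n - 1 - x) powr (H - 3/2)))"

definition gH :: "real \<Rightarrow> real \<Rightarrow> nat \<Rightarrow> real" where
  "gH \<sigma> H n = \<sigma> * CH H *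
     (LBINT x = real n - 1..real n. x powr (1/2 - H) * (real n - x) powr (H - 1/2) *
        (LBINT y = 0..1. (y * (real n - x) + x) powr (H - 1/2) * y powr (H - 3/2)))"

definition xH :: "real \<Rightarrow> nat \<Rightarrow> real" where
  "xH H n = real n - 1 - 1 / ((1 + 1 / (real n - 1)) powr (2 / (3 - 2*H)) - 1)"

definition iH :: "real \<Rightarrow> nat \<Rightarrow> nat" where
  "iH H n = nat (\<lfloor>xH H n\<rfloor> + 1)"

definition Yhat :: "real \<Rightarrow> real \<Rightarrow> (nat \<Rightarrow> 'a \<Rightarrow> real) \<Rightarrow> nat \<Rightarrow> 'a \<Rightarrow> real" where
  "Yhat \<sigma> H \<xi> n \<omega> = (\<Sum>i = iH H n..n - 1. jH \<sigma> H n i * \<xi> i \<omega>)"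

end

theory Submission
  imports Defs
begin



lemma lbint_Ioo_def:
  fixes a b :: real and f g :: "real \<Rightarrow> real"
  assumes "a \<le> b"
  shows "(LBINT x=a..b. f x) = (\<integral>x. indicator {a<..<b} x * f x \<partial>lborel)"
  using assms by (simp add: interval_integral_Ioo set_lebesgue_integral_def real_scaleR_def)

lemma lbint_nonneg:
  fixes a b :: real and f g :: "real \<Rightarrow> real"
  assumes "a \<le> b" "\<And>x. a < x \<Longrightarrow> x < b \<Longrightarrow> 0 \<le> f x"
  shows "0 \<le> (LBINT x=a..b. f x)"
  apply (subst lbint_Ioo_def[OF assms(1)])
  by (intro integral_nonneg_AE AE_I2) (auto simp: indicator_def assms(2))

lemma lbint_ub_dom:
  fixes a b :: real and f g :: "real \<Rightarrow> real"
  assumes "a \<le> b" "set_integrable lborel {a<..<b} g"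
    "\<And>x. a < x \<Longrightarrow> x < b \<Longrightarrow> 0 \<le> f x \<and> f x \<le> g x"
  shows "(LBINT x=a..b. f x) \<le> (LBINT x=a..b. g x)"
  apply (subst lbint_Ioo_def[OF assms(1)])+
  apply (rule integral_mono_AE')
  using assms(2) apply (simp add: set_integrable_def)
  using assms(3) by (auto intro!: AE_I2 simp: indicator_def intro: order_trans)

lemma lbint_ub_const:
  fixes a b :: real and f g :: "real \<Rightarrow> real"
  assumes "a \<le> b" "\<And>x. a < x \<Longrightarrow> x < b \<Longrightarrow> 0 \<le> f x \<and> f x \<le> M"
  shows "(LBINT x=a..b. f x) \<le> M * (b - a)"
proof -
  have "set_integrable lborel {a<..<b} (\<lambda>x. M)"
    using interval_integral_const(1)[of a b M] assms(1)
    by (simp add: interval_lebesgue_integrable_def)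
  from lbint_ub_dom[OF assms(1) this assms(2)] show ?thesis by simp
qed

lemma lbint_mono:
  fixes a b :: real and f g :: "real \<Rightarrow> real"
  assumes "a \<le> b" "set_integrable lborel {a<..<b} f" "set_integrable lborel {a<..<b} g"
    "\<And>x. a < x \<Longrightarrow> x < b \<Longrightarrow> f x \<le> g x"
  shows "(LBINT x=a..b. f x) \<le> (LBINT x=a..b. g x)"
  using assms by (simp add: interval_integral_Ioo) (rule set_integral_mono, auto)

lemma lbint_lb_const:
  fixes a b :: real and f g :: "real \<Rightarrow> real"
  assumes "a \<le> b" "set_integrable lborel {a<..<b} f" "\<And>x. a < x \<Longrightarrow> x < b \<Longrightarrow> m \<le> f x"
  shows "m * (b - a) \<le> (LBINT x=a..b. f x)"
proof -
  have "set_integrable lborel {a<..<b} (\<lambda>x. m)"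
    using interval_integral_const(1)[of a b m] assms(1)
    by (simp add: interval_lebesgue_integrable_def)
  from lbint_mono[OF assms(1) this assms(2) assms(3)] show ?thesis by simp
qed

lemma lbint_param_meas:
  fixes c d :: real and f :: "real \<Rightarrow> real \<Rightarrow> real"
  assumes "c \<le> d" "(\<lambda>p. f (fst p) (snd p)) \<in> borel_measurable (lborel \<Otimes>\<^sub>M lborel)"
  shows "(\<lambda>x. LBINT y=c..d. f x y) \<in> borel_measurable lborel"
proof -
  have "(\<lambda>p. indicator {c<..<d} (snd p) * f (fst p) (snd p)) \<in> borel_measurable (lborel \<Otimes>\<^sub>M lborel)"
    using assms(2) by measurable
  then have "(\<lambda>x. \<integral>y. indicator {c<..<d} y * f x y \<partial>lborel) \<in> borel_measurable lborel"
    by (intro lborel.borel_measurable_lebesgue_integral) (simp add: case_prod_beta')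
  then show ?thesis by (simp add: lbint_Ioo_def[OF assms(1)])
qed


lemma set_integrable_bdd:
  fixes a b B :: real and f :: "real \<Rightarrow> real"
  assumes "f \<in> borel_measurable lborel" "\<And>x. a < x \<Longrightarrow> x < b \<Longrightarrow> \<bar>f x\<bar> \<le> B"
  shows "set_integrable lborel {a<..<b} f"
proof -
  have "emeasure lborel {a<..<b} < \<top>"
    by (cases "a \<le> b") (auto simp: emeasure_lborel_Ioo)
  then show ?thesis unfolding set_integrable_def
    by (intro integrableI_bounded_set_indicator) (use assms in \<open>auto intro!: AE_I2\<close>)
qed

lemma powr_integrable01:
  fixes a :: real assumes "0 < a"
  shows "set_integrable lborel {0<..<1} (\<lambda>v. v powr (a - 1))"
proof -
  have "(\<lambda>t. t powr (a - 1)) integrable_on {0..1}"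
    by (rule integrable_on_powr_from_0) (use assms in auto)
  hence "(\<lambda>t. t powr (a - 1)) absolutely_integrable_on {0..1}"
    by (subst absolutely_integrable_on_iff_nonneg) auto
  hence "set_integrable lborel {0..1} (\<lambda>t. t powr (a - 1))"
    unfolding set_integrable_def by (subst (asm) integrable_completion) auto
  then show ?thesis by (rule set_integrable_subset) auto
qed


lemma lbint01_param_meas:
  fixes f :: "real \<Rightarrow> real \<Rightarrow> real"
  assumes "(\<lambda>p. f (fst p) (snd p)) \<in> borel_measurable (lborel \<Otimes>\<^sub>M lborel)"
  shows "(\<lambda>x. LBINT y=0..1. f x y) \<in> borel_measurable lborel"
  using lbint_param_meas[of 0 1 f] assms by (simp add: zero_ereal_def one_ereal_def)
lemmas lbint01_lb_const = lbint_lb_const[of 0 1, simplified zero_ereal_def[symmetric] one_ereal_def[symmetric], simplified]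
lemmas lbint01_ub_const = lbint_ub_const[of 0 1, simplified zero_ereal_def[symmetric] one_ereal_def[symmetric], simplified]
lemmas lbint01_ub_dom = lbint_ub_dom[of 0 1, simplified zero_ereal_def[symmetric] one_ereal_def[symmetric], simplified]
lemmas lbint01_nonneg = lbint_nonneg[of 0 1, simplified zero_ereal_def[symmetric] one_ereal_def[symmetric], simplified]



lemma j_lower:
  fixes H :: real and n i :: nat
  assumes H: "1/2 < H" "H < 1" and i: "2 \<le> i" "i + 2 \<le> n"
  shows "(real n - 1) / real n * (real (n - i) + 1) powr (H - 3/2) \<le>
    (LBINT x = real i - 1..real i. x powr (1/2 - H) *
        (LBINT v = 0..1. (v + real n - 1) powr (H - 1/2) * (v + real n - 1 - x) powr (H - 3/2)))"
proof -
  define F where "F x = (LBINT v = 0..1. (v + real n - 1) powr (H - 1/2) * (v + real n - 1 - x) powr (H - 3/2))" for x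
  have kk: "real (n - i) = real n - real i" using i by auto
  have Fmeas: "F \<in> borel_measurable lborel" unfolding F_def
    by (rule lbint01_param_meas) measurable
  have Fb: "(real n - 1) powr (H - 1/2) * (real (n - i) + 1) powr (H - 3/2) \<le> F x \<and> F x \<le> real n powr (H - 1/2)"
    if x: "real i - 1 < x" "x < real i" for x
  proof -
    have int: "set_integrable lborel {0<..<1} (\<lambda>v. (v + real n - 1) powr (H - 1/2) * (v + real n - 1 - x) powr (H - 3/2))"
    proof -
      have "continuous_on {0..1} (\<lambda>v. (v + real n - 1) powr (H - 1/2) * (v + real n - 1 - x) powr (H - 3/2))"
        using x i by (auto intro!: continuous_intros)
      then have "set_integrable lborel {0..1} (\<lambda>v. (v + real n - 1) powr (H - 1/2) * (v + real n - 1 - x) powr (H - 3/2))"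
        by (rule borel_integrable_atLeastAtMost')
      then show ?thesis by (rule set_integrable_subset) auto
    qed
    have lo: "(real n - 1) powr (H - 1/2) * (real (n - i) + 1) powr (H - 3/2) \<le> F x"
      unfolding F_def
    proof (rule lbint01_lb_const[OF int])
      fix v :: real assume v: "0 < v" "v < 1"
      have "(real n - 1) powr (H - 1/2) \<le> (v + real n - 1) powr (H - 1/2)"
        using v H i by (intro powr_mono2) auto
      moreover have "(real (n - i) + 1) powr (H - 3/2) \<le> (v + real n - 1 - x) powr (H - 3/2)"
        using v H i x kk by (intro powr_mono2') auto
      ultimately show "(real n - 1) powr (H - 1/2) * (real (n - i) + 1) powr (H - 3/2) \<le> (v + real n - 1) powr (H - 1/2) * (v + real n - 1 - x) powr (H - 3/2)"
        by (intro mult_mono) auto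
    qed
    have up: "F x \<le> real n powr (H - 1/2)"
      unfolding F_def
    proof (rule lbint01_ub_const)
      fix v :: real assume v: "0 < v" "v < 1"
      have "(v + real n - 1) powr (H - 1/2) \<le> real n powr (H - 1/2)"
        using v H i by (intro powr_mono2) auto
      moreover have "(v + real n - 1 - x) powr (H - 3/2) \<le> 1 powr (H - 3/2)"
        using v H i x by (intro powr_mono2') auto
      ultimately show "0 \<le> (v + real n - 1) powr (H - 1/2) * (v + real n - 1 - x) powr (H - 3/2) \<and>
          (v + real n - 1) powr (H - 1/2) * (v + real n - 1 - x) powr (H - 3/2) \<le> real n powr (H - 1/2)"
        using mult_mono[of "(v + real n - 1) powr (H - 1/2)" "real n powr (H - 1/2)" "(v + real n - 1 - x) powr (H - 3/2)" 1]
        by simp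
    qed
    show ?thesis using lo up by simp
  qed
  have oint: "set_integrable lborel {real i - 1<..<real i} (\<lambda>x. x powr (1/2 - H) * F x)"
  proof (rule set_integrable_bdd[where B="real n powr (H - 1/2)"])
    show "(\<lambda>x. x powr (1/2 - H) * F x) \<in> borel_measurable lborel" using Fmeas by measurable
  next
    fix x assume x: "real i - 1 < x" "x < real i"
    have "x powr (1/2 - H) \<le> 1 powr (1/2 - H)" using x i H by (intro powr_mono2') auto
    moreover have "0 \<le> F x" unfolding F_def by (rule lbint01_nonneg) simp
    moreover have "F x \<le> real n powr (H - 1/2)" using Fb[OF x] by simp
    ultimately show "\<bar>x powr (1/2 - H) * F x\<bar> \<le> real n powr (H - 1/2)"
      using mult_mono[of "x powr (1/2 - H)" 1 "F x" "real n powr (H - 1/2)"] by (simp add: abs_mult)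
  qed
  have "real n powr (1/2 - H) * ((real n - 1) powr (H - 1/2) * (real (n - i) + 1) powr (H - 3/2)) * (real i - (real i - 1))
      \<le> (LBINT x = real i - 1..real i. x powr (1/2 - H) * F x)"
  proof (rule lbint_lb_const[OF _ oint])
    fix x assume x: "real i - 1 < x" "x < real i"
    have "real n powr (1/2 - H) \<le> x powr (1/2 - H)" using x i H by (intro powr_mono2') auto
    then show "real n powr (1/2 - H) * ((real n - 1) powr (H - 1/2) * (real (n - i) + 1) powr (H - 3/2)) \<le> x powr (1/2 - H) * F x"
      using Fb[OF x] by (intro mult_mono) auto
  qed simp
  moreover have "(real n - 1) / real n \<le> real n powr (1/2 - H) * (real n - 1) powr (H - 1/2)"
  proof -
    have "real n powr (1/2 - H) * (real n - 1) powr (H - 1/2) = ((real n - 1) / real n) powr (H - 1/2)"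
    proof -
      have "real n powr (1/2 - H) = inverse (real n powr (H - 1/2))"
        using powr_minus[of "real n" "H - 1/2"] by (simp only: minus_diff_eq)
      moreover have "((real n - 1) / real n) powr (H - 1/2) = (real n - 1) powr (H - 1/2) / real n powr (H - 1/2)"
        by (rule powr_divide)
      ultimately show ?thesis by (simp add: inverse_eq_divide)
    qed
    moreover have "((real n - 1) / real n) powr 1 \<le> ((real n - 1) / real n) powr (H - 1/2)"
      using i H by (intro powr_mono') auto
    ultimately show ?thesis using i by simp
  qed
  ultimately have A1: "real n powr (1/2 - H) * ((real n - 1) powr (H - 1/2) * (real (n - i) + 1) powr (H - 3/2)) * (real i - (real i - 1))
      \<le> (LBINT x = real i - 1..real i. x powr (1/2 - H) * F x)"
    and A2: "(real n - 1) / real n \<le> real n powr (1/2 - H) * (real n - 1) powr (H - 1/2)" by auto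
    have "(real n - 1) / real n * (real (n - i) + 1) powr (H - 3/2) \<le> real n powr (1/2 - H) * (real n - 1) powr (H - 1/2) * (real (n - i) + 1) powr (H - 3/2)"
      by (rule mult_right_mono[OF A2]) simp
    also have "\<dots> = real n powr (1/2 - H) * ((real n - 1) powr (H - 1/2) * (real (n - i) + 1) powr (H - 3/2)) * (real i - (real i - 1))"
      by (simp only: mult.assoc) simp
    finally show ?thesis using A1 unfolding F_def by linarith
qed


definition I0 :: "real \<Rightarrow> real" where
  "I0 H = (LBINT v = 0..1. v powr (H - 3/2))"

lemma I0_int: "1/2 < (H::real) \<Longrightarrow> set_integrable lborel {0<..<1} (\<lambda>v. v powr (H - 3/2))"
  using powr_integrable01[of "H - 1/2"] by (simp add: algebra_simps)

lemma I0_nonneg: "0 \<le> I0 H"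
  unfolding I0_def by (rule lbint01_nonneg) simp

definition Wt :: "real \<Rightarrow> nat \<Rightarrow> real" where
  "Wt H k = (if k = 1 then I0 H else (real k - 1) powr (H - 3/2))"

lemma Wt_nonneg: "0 \<le> Wt H k"
  unfolding Wt_def using I0_nonneg by auto

lemma j_upper:
  fixes H c :: real and n i :: nat
  assumes H: "1/2 < H" "H < 1" and i: "1 \<le> i" "i < n" and c: "0 < c" "c * real n \<le> real i - 1"
  shows "(LBINT x = real i - 1..real i. x powr (1/2 - H) *
        (LBINT v = 0..1. (v + real n - 1) powr (H - 1/2) * (v + real n - 1 - x) powr (H - 3/2)))
       \<le> c powr (1/2 - H) * Wt H (n - i)"
proof -
  define F where "F x = (LBINT v = 0..1. (v + real n - 1) powr (H - 1/2) * (v + real n - 1 - x) powr (H - 3/2))" for x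
  have kk: "real (n - i) = real n - real i" using i by auto
  have F0: "0 \<le> F x" for x unfolding F_def by (rule lbint01_nonneg) simp
  have Fb: "F x \<le> real n powr (H - 1/2) * Wt H (n - i)"
    if x: "real i - 1 < x" "x < real i" for x
  proof (cases "n - i = 1")
    case True
    have "F x \<le> (LBINT v = 0..1. real n powr (H - 1/2) * v powr (H - 3/2))"
      unfolding F_def
    proof (rule lbint01_ub_dom)
      show "set_integrable lborel {0<..<1} (\<lambda>v. real n powr (H - 1/2) * v powr (H - 3/2))"
        using I0_int[OF H(1)] by simp
    next
      fix v :: real assume v: "0 < v" "v < 1"
      have "(v + real n - 1) powr (H - 1/2) \<le> real n powr (H - 1/2)"
        using v H i by (intro powr_mono2) auto
      moreover have "(v + real n - 1 - x) powr (H - 3/2) \<le> v powr (H - 3/2)"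
        using v H i x kk True by (intro powr_mono2') auto
      ultimately show "0 \<le> (v + real n - 1) powr (H - 1/2) * (v + real n - 1 - x) powr (H - 3/2) \<and>
          (v + real n - 1) powr (H - 1/2) * (v + real n - 1 - x) powr (H - 3/2) \<le> real n powr (H - 1/2) * v powr (H - 3/2)"
        using mult_mono[of "(v + real n - 1) powr (H - 1/2)" "real n powr (H - 1/2)" "(v + real n - 1 - x) powr (H - 3/2)" "v powr (H - 3/2)"]
        by simp
    qed
    then show ?thesis using True by (simp add: Wt_def I0_def)
  next
    case False
    then have k2: "2 \<le> n - i" using i by auto
    have "F x \<le> real n powr (H - 1/2) * (real (n - i) - 1) powr (H - 3/2)"
      unfolding F_def
    proof (rule lbint01_ub_const)
      fix v :: real assume v: "0 < v" "v < 1"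
      have "(v + real n - 1) powr (H - 1/2) \<le> real n powr (H - 1/2)"
        using v H i by (intro powr_mono2) auto
      moreover have "(v + real n - 1 - x) powr (H - 3/2) \<le> (real (n - i) - 1) powr (H - 3/2)"
        using v H i x kk k2 by (intro powr_mono2') auto
      ultimately show "0 \<le> (v + real n - 1) powr (H - 1/2) * (v + real n - 1 - x) powr (H - 3/2) \<and>
          (v + real n - 1) powr (H - 1/2) * (v + real n - 1 - x) powr (H - 3/2) \<le> real n powr (H - 1/2) * (real (n - i) - 1) powr (H - 3/2)"
        using mult_mono[of "(v + real n - 1) powr (H - 1/2)" "real n powr (H - 1/2)" "(v + real n - 1 - x) powr (H - 3/2)" "(real (n - i) - 1) powr (H - 3/2)"]
        by simp
    qed
    then show ?thesis using False by (simp add: Wt_def)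
  qed
  have cn: "(c * real n) powr (1/2 - H) * real n powr (H - 1/2) = c powr (1/2 - H)"
  proof -
    have "real n powr (1/2 - H) * real n powr (H - 1/2) = real n powr ((1/2 - H) + (H - 1/2))"
      by (rule powr_add[symmetric])
    also have "\<dots> = 1" using i by simp
    finally show ?thesis by (simp add: powr_mult)
  qed
  have "(LBINT x = real i - 1..real i. x powr (1/2 - H) * F x) \<le> c powr (1/2 - H) * Wt H (n - i) * (real i - (real i - 1))"
  proof (rule lbint_ub_const)
    fix x assume x: "real i - 1 < x" "x < real i"
    have "x powr (1/2 - H) \<le> (c * real n) powr (1/2 - H)" using x i H c by (intro powr_mono2') auto
    then have "x powr (1/2 - H) * F x \<le> (c * real n) powr (1/2 - H) * (real n powr (H - 1/2) * Wt H (n - i))"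
      using Fb[OF x] F0[of x] by (intro mult_mono) auto
    also have "\<dots> = c powr (1/2 - H) * Wt H (n - i)" using cn by (simp only: mult.assoc[symmetric])
    finally show "0 \<le> x powr (1/2 - H) * F x \<and> x powr (1/2 - H) * F x \<le> c powr (1/2 - H) * Wt H (n - i)"
      using F0[of x] by simp
  qed simp
  then show ?thesis unfolding F_def by simp
qed


lemma ratio_lb:
  fixes H N :: real assumes H: "1/2 < H" "H < 1" and N: "2 \<le> N"
  shows "(N - 1) / N \<le> N powr (1/2 - H) * (N - 1) powr (H - 1/2)"
proof -
  have e1: "N powr (1/2 - H) = inverse (N powr (H - 1/2))"
    using powr_minus[of N "H - 1/2"] by (simp only: minus_diff_eq)
  have e2: "((N - 1) / N) powr (H - 1/2) = (N - 1) powr (H - 1/2) / N powr (H - 1/2)"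
    by (rule powr_divide)
  have "((N - 1) / N) powr 1 \<le> ((N - 1) / N) powr (H - 1/2)"
    using N H by (intro powr_mono') auto
  then show ?thesis using N e1 e2 by (simp add: inverse_eq_divide)
qed

lemma ratio_ub:
  fixes H N :: real assumes H: "1/2 < H" "H < 1" and N: "2 \<le> N"
  shows "(N - 1) powr (1/2 - H) * N powr (H - 1/2) \<le> 2"
proof -
  have e1: "(N - 1) powr (1/2 - H) = inverse ((N - 1) powr (H - 1/2))"
    using powr_minus[of "N - 1" "H - 1/2"] by (simp only: minus_diff_eq)
  have e2: "(N / (N - 1)) powr (H - 1/2) = N powr (H - 1/2) / (N - 1) powr (H - 1/2)"
    by (rule powr_divide)
  have "(N / (N - 1)) powr (H - 1/2) \<le> (N / (N - 1)) powr 1"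
    using N H by (intro powr_mono) auto
  also have "\<dots> \<le> 2" using N by (simp add: field_simps)
  finally show ?thesis using N e1 e2 by (simp add: inverse_eq_divide mult.commute)
qed

lemma lin_integral: fixes N :: real shows "(LBINT x = ereal (N - 1)..ereal N. (1/2) * (N - x)) = (1/4::real)"
proof -
  have "(LBINT x = ereal (N - 1)..ereal N. (1/2) * (N - x)) = (\<lambda>x. - ((N - x) * (N - x)) / 4) N - (\<lambda>x. - ((N - x) * (N - x)) / 4) (N - 1)"
    by (rule interval_integral_FTC_finite)
       (auto intro!: continuous_intros derivative_eq_intros simp: has_real_derivative_iff_has_vector_derivative[symmetric] field_simps)
  then show ?thesis by (simp add: power2_eq_square)
qed

lemma g_bounds:
  fixes H :: real and n :: nat
  assumes H: "1/2 < H" "H < 1" and n: "2 \<le> n"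
  shows "1/4 \<le> (LBINT x = real n - 1..real n. x powr (1/2 - H) * (real n - x) powr (H - 1/2) *
        (LBINT y = 0..1. (y * (real n - x) + x) powr (H - 1/2) * y powr (H - 3/2)))"
    and "(LBINT x = real n - 1..real n. x powr (1/2 - H) * (real n - x) powr (H - 1/2) *
        (LBINT y = 0..1. (y * (real n - x) + x) powr (H - 1/2) * y powr (H - 3/2))) \<le> 2 * I0 H"
proof -
  define G where "G x = (LBINT y = 0..1. (y * (real n - x) + x) powr (H - 1/2) * y powr (H - 3/2))" for x
  have Gmeas: "G \<in> borel_measurable lborel" unfolding G_def
    by (rule lbint01_param_meas) measurable
  have G0: "0 \<le> G x" for x unfolding G_def by (rule lbint01_nonneg) simp
  have domint: "set_integrable lborel {0<..<1} (\<lambda>y. real n powr (H - 1/2) * y powr (H - 3/2))"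
    using I0_int[OF H(1)] by simp
  have Gb: "(real n - 1) powr (H - 1/2) \<le> G x \<and> G x \<le> real n powr (H - 1/2) * I0 H"
    if x: "real n - 1 < x" "x < real n" for x
  proof -
    have pt: "(real n - 1) powr (H - 1/2) \<le> (y * (real n - x) + x) powr (H - 1/2) * y powr (H - 3/2) \<and>
              (y * (real n - x) + x) powr (H - 1/2) * y powr (H - 3/2) \<le> real n powr (H - 1/2) * y powr (H - 3/2)"
      if y: "0 < y" "y < 1" for y
    proof -
      have b1: "x \<le> y * (real n - x) + x" using x y by simp
      have b2: "y * (real n - x) + x \<le> real n"
        using x y mult_left_le_one_le[of "real n - x" y] by linarith
      have "(real n - 1) powr (H - 1/2) \<le> (y * (real n - x) + x) powr (H - 1/2)"
        using b1 x H n by (intro powr_mono2) auto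
      moreover have "1 powr (H - 3/2) \<le> y powr (H - 3/2)" using y H by (intro powr_mono2') auto
      moreover have "(y * (real n - x) + x) powr (H - 1/2) \<le> real n powr (H - 1/2)"
        using b1 b2 x H n by (intro powr_mono2) auto
      ultimately show ?thesis
        using mult_mono[of "(real n - 1) powr (H - 1/2)" "(y * (real n - x) + x) powr (H - 1/2)" 1 "y powr (H - 3/2)"]
          mult_right_mono[of "(y * (real n - x) + x) powr (H - 1/2)" "real n powr (H - 1/2)" "y powr (H - 3/2)"]
        by simp
    qed
    have int: "set_integrable lborel {0<..<1} (\<lambda>y. (y * (real n - x) + x) powr (H - 1/2) * y powr (H - 3/2))"
    proof (rule set_integrable_bound[OF domint])
      show "set_borel_measurable lborel {0<..<1} (\<lambda>y. (y * (real n - x) + x) powr (H - 1/2) * y powr (H - 3/2))"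
        unfolding set_borel_measurable_def by measurable
      show "AE y in lborel. y \<in> {0<..<1} \<longrightarrow> norm ((y * (real n - x) + x) powr (H - 1/2) * y powr (H - 3/2)) \<le> norm (real n powr (H - 1/2) * y powr (H - 3/2))"
        using pt by (intro AE_I2) auto
    qed
    have "(real n - 1) powr (H - 1/2) \<le> G x" unfolding G_def
      by (rule lbint01_lb_const[OF int]) (use pt in auto)
    moreover have "G x \<le> (LBINT y = 0..1. real n powr (H - 1/2) * y powr (H - 3/2))" unfolding G_def
      by (rule lbint01_ub_dom[OF domint]) (use pt in auto)
    ultimately show ?thesis by (simp add: I0_def)
  qed
  have hb: "x powr (1/2 - H) * (real n - x) powr (H - 1/2) * G x \<le> 2 * I0 H"
    if x: "real n - 1 < x" "x < real n" for x
  proof -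
    have "x powr (1/2 - H) \<le> (real n - 1) powr (1/2 - H)" using x H n by (intro powr_mono2') auto
    moreover have "(real n - x) powr (H - 1/2) \<le> 1" using x H by (intro powr_le1) auto
    ultimately have "x powr (1/2 - H) * (real n - x) powr (H - 1/2) \<le> (real n - 1) powr (1/2 - H) * 1"
      by (intro mult_mono) auto
    then have "x powr (1/2 - H) * (real n - x) powr (H - 1/2) * G x \<le> (real n - 1) powr (1/2 - H) * (real n powr (H - 1/2) * I0 H)"
      using Gb[OF x] G0[of x] by (intro mult_mono) auto
    also have "\<dots> = ((real n - 1) powr (1/2 - H) * real n powr (H - 1/2)) * I0 H" by simp
    also have "\<dots> \<le> 2 * I0 H"
      using ratio_ub[OF H, of "real n"] n I0_nonneg[of H] by (intro mult_right_mono) auto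
    finally show ?thesis .
  qed
  have hmeas: "(\<lambda>x. x powr (1/2 - H) * (real n - x) powr (H - 1/2) * G x) \<in> borel_measurable lborel"
    using Gmeas by measurable
  have h0: "0 \<le> x powr (1/2 - H) * (real n - x) powr (H - 1/2) * G x" for x using G0[of x] by simp
  show "(LBINT x = real n - 1..real n. x powr (1/2 - H) * (real n - x) powr (H - 1/2) *
        (LBINT y = 0..1. (y * (real n - x) + x) powr (H - 1/2) * y powr (H - 3/2))) \<le> 2 * I0 H"
    using lbint_ub_const[of "real n - 1" "real n" "\<lambda>x. x powr (1/2 - H) * (real n - x) powr (H - 1/2) * G x" "2 * I0 H"]
      hb h0 unfolding G_def by simp
  have hint: "set_integrable lborel {real n - 1<..<real n} (\<lambda>x. x powr (1/2 - H) * (real n - x) powr (H - 1/2) * G x)"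
    by (rule set_integrable_bdd[OF hmeas, of _ _ "2 * I0 H"]) (use hb h0 in auto)
  have linint: "set_integrable lborel {real n - 1<..<real n} (\<lambda>x. (1/2) * (real n - x))"
  proof -
    have "set_integrable lborel {real n - 1..real n} (\<lambda>x. (1/2) * (real n - x))"
      by (rule borel_integrable_atLeastAtMost') (auto intro!: continuous_intros)
    then show ?thesis by (rule set_integrable_subset) auto
  qed
  have "(LBINT x = real n - 1..real n. (1/2) * (real n - x)) \<le> (LBINT x = real n - 1..real n. x powr (1/2 - H) * (real n - x) powr (H - 1/2) * G x)"
  proof (rule lbint_mono[OF _ linint hint])
    fix x assume x: "real n - 1 < x" "x < real n"
    have a1: "real n powr (1/2 - H) \<le> x powr (1/2 - H)" using x H n by (intro powr_mono2') auto
    have a2: "(real n - x) powr 1 \<le> (real n - x) powr (H - 1/2)" using x H by (intro powr_mono') auto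
    have "1/2 \<le> (real n - 1) / real n" using n by (simp add: field_simps)
    then have "1/2 \<le> real n powr (1/2 - H) * (real n - 1) powr (H - 1/2)"
      using ratio_lb[OF H, of "real n"] n by linarith
    then have "(1/2) * (real n - x) \<le> (real n powr (1/2 - H) * (real n - 1) powr (H - 1/2)) * (real n - x)"
      using x by (intro mult_right_mono) auto
    also have "\<dots> = real n powr (1/2 - H) * (real n - x) * (real n - 1) powr (H - 1/2)" by simp
    also have "\<dots> \<le> x powr (1/2 - H) * (real n - x) powr (H - 1/2) * G x"
      using a1 a2 x Gb[OF x] by (intro mult_mono) auto
    finally show "(1/2) * (real n - x) \<le> x powr (1/2 - H) * (real n - x) powr (H - 1/2) * G x" .
  qed simp
  then show "1/4 \<le> (LBINT x = real n - 1..real n. x powr (1/2 - H) * (real n - x) powr (H - 1/2) *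
        (LBINT y = 0..1. (y * (real n - x) + x) powr (H - 1/2) * y powr (H - 3/2)))"
    using lin_integral[of "real n"] unfolding G_def by simp
qed




lemma CH_pos: "1/2 < H \<Longrightarrow> H < 1 \<Longrightarrow> 0 < CH H"
  unfolding CH_def cH_def by (auto intro!: mult_pos_pos divide_pos_pos)

lemma xH_bounds:
  fixes H :: real and n :: nat
  assumes H: "1/2 < H" "H < 1" and n: "2 \<le> n"
  shows "(H - 1/2) * real n - 1 \<le> xH H n" "xH H n \<le> 2/3 * (real n - 1)"
proof -
  define p where "p = 2 / (3 - 2*H)"
  define t where "t = 1 / (real n - 1)"
  have p: "1 < p" "p < 2" using H by (auto simp: p_def field_simps)
  have t: "0 < t" "t \<le> 1" using n by (auto simp: t_def field_simps)
  define E where "E = (1 + t) powr p - 1"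
  have xe: "xH H n = real n - 1 - 1 / E" by (simp add: xH_def E_def p_def t_def)
  have lnlb: "t / (1 + t) \<le> ln (1 + t)"
  proof -
    have "ln (1 / (1 + t)) \<le> 1 / (1 + t) - 1" using t by (intro ln_le_minus_one) auto
    moreover have "ln (1 / (1 + t)) = - ln (1 + t)" using t by (simp add: ln_div)
    moreover have "1 / (1 + t) - 1 = - (t / (1 + t))" using t by (simp add: field_simps)
    ultimately show ?thesis by linarith
  qed
  have tt: "t / (1 + t) = 1 / real n" using n by (simp add: t_def field_simps)
  have Elb: "p / real n \<le> E"
  proof -
    have "(1 + t) powr p = exp (p * ln (1 + t))" using t by (simp add: powr_def)
    moreover have "1 + p * ln (1 + t) \<le> exp (p * ln (1 + t))" by (rule exp_ge_add_one_self)
    moreover have "p * (t / (1 + t)) \<le> p * ln (1 + t)" using lnlb p by (intro mult_left_mono) auto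
    moreover have "p * (t / (1 + t)) = p / real n" using tt by simp
    ultimately show ?thesis unfolding E_def by linarith
  qed
  have "0 < p / real n" using p n by simp
  then have Epos: "0 < E" using Elb by linarith
  have "1 / E \<le> 1 / (p / real n)" using Elb Epos p n by (intro divide_left_mono) (auto intro: mult_pos_pos)
  also have "\<dots> = real n / p" by simp
  also have "\<dots> = real n * ((3 - 2*H) / 2)" by (simp add: p_def)
  finally show "(H - 1/2) * real n - 1 \<le> xH H n" unfolding xe by (simp add: algebra_simps)
  have Eub: "E \<le> 3 * t"
  proof -
    have "(1 + t) powr p \<le> (1 + t) powr 2" using p t by (intro powr_mono) auto
    also have "\<dots> = (1 + t) * (1 + t)" using t by (simp add: powr_numeral power2_eq_square)
    finally have "(1 + t) powr p \<le> (1 + t) * (1 + t)" .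
    moreover have "t * t \<le> t" using t by (simp add: mult_left_le_one_le)
    ultimately show ?thesis unfolding E_def by (simp add: algebra_simps)
  qed
  have "1 / (3 * t) \<le> 1 / E" using Eub Epos by (intro divide_left_mono) auto
  moreover have "1 / (3 * t) = (real n - 1) / 3" by (simp add: t_def)
  ultimately show "xH H n \<le> 2/3 * (real n - 1)" unfolding xe by simp
qed

lemma iH_bounds:
  fixes H :: real and n :: nat
  assumes H: "1/2 < H" "H < 1" and n: "2 \<le> n"
  shows "(H - 1/2) * real n - 1 \<le> real (iH H n)" "real (iH H n) \<le> 2/3 * (real n - 1) + 1"
proof -
  have x1: "(H - 1/2) * real n - 1 \<le> xH H n" and x2: "xH H n \<le> 2/3 * (real n - 1)"
    using xH_bounds[OF H n] by auto
  have "0 \<le> (H - 1/2) * real n" using H by simp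
  then have "-1 \<le> xH H n" using x1 by linarith
  then have nn: "0 \<le> \<lfloor>xH H n\<rfloor> + 1" by linarith
  have "real (iH H n) = of_int (\<lfloor>xH H n\<rfloor> + 1)" unfolding iH_def using nn by simp
  moreover have "xH H n \<le> of_int (\<lfloor>xH H n\<rfloor> + 1)" by linarith
  moreover have "of_int (\<lfloor>xH H n\<rfloor> + 1) \<le> xH H n + 1" by linarith
  ultimately show "(H - 1/2) * real n - 1 \<le> real (iH H n)" "real (iH H n) \<le> 2/3 * (real n - 1) + 1"
    using x1 x2 by linarith+
qed


lemma diverge:
  fixes H B :: real assumes H: "1/2 < H"
  shows "\<exists>K. B < (\<Sum>k=2..K. (real k + 1) powr (H - 3/2))"
proof (rule ccontr)
  assume "\<not> ?thesis"
  then have bd: "\<And>K. (\<Sum>k=2..K. (real k + 1) powr (H - 3/2)) \<le> B" by (simp add: not_less)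
  define f where "f k = (real k + 1) powr (H - 3/2)" for k :: nat
  have f0: "0 \<le> f k" for k by (simp add: f_def)
  have "(\<Sum>k\<le>K. f k) \<le> B + f 0 + f 1" for K
  proof (cases "K \<le> 1")
    case True
    then have "(\<Sum>k\<le>K. f k) \<le> (\<Sum>k\<le>1. f k)" using f0 by (intro sum_mono2) auto
    moreover have "(\<Sum>k\<le>(1::nat). f k) = f 0 + f 1" by simp
    moreover have "f 2 \<le> B" using bd[of 2] by (simp add: f_def)
    ultimately show ?thesis using f0[of 2] by linarith
  next
    case False
    then have "{..K} = {0,1} \<union> {2..K}" by auto
    then have "(\<Sum>k\<le>K. f k) = f 0 + f 1 + (\<Sum>k=2..K. f k)" by (simp add: sum.union_disjoint)
    then show ?thesis using bd[of K] by (simp add: f_def)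
  qed
  then have sf: "summable f" by (intro bounded_imp_summable[OF f0]) auto
  have "summable (\<lambda>k. inverse (real (Suc k)))"
  proof (rule summable_comparison_test'[OF sf])
    fix k :: nat
    have "(real k + 1) powr (-1) \<le> (real k + 1) powr (H - 3/2)" using H by (intro powr_mono) auto
    then show "norm (inverse (real (Suc k))) \<le> f k" by (simp add: f_def powr_minus add.commute)
  qed
  then have "summable (\<lambda>k. inverse (real k))" by (subst summable_Suc_iff[symmetric]) simp
  then show False using not_summable_harmonic by blast
qed

lemma tail_small:
  fixes p \<epsilon> :: real assumes p: "p < -1" and e: "0 < \<epsilon>"
  shows "\<exists>K. \<forall>F. finite F \<longrightarrow> F \<subseteq> {K..} \<longrightarrow> (\<Sum>j\<in>F. real j powr p) \<le> \<epsilon>"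
proof -
  define h where "h j = real j powr p" for j :: nat
  have sh: "summable h" unfolding h_def using p by (simp add: summable_real_powr_iff)
  have "(\<lambda>K. \<Sum>j<K. h j) \<longlonglongrightarrow> suminf h" using sh by (rule summable_LIMSEQ)
  then have "(\<lambda>K. suminf h - (\<Sum>j<K. h j)) \<longlonglongrightarrow> suminf h - suminf h" by (intro tendsto_intros)
  then have "(\<lambda>K. suminf h - (\<Sum>j<K. h j)) \<longlonglongrightarrow> 0" by simp
  then obtain K where K: "\<And>K'. K' \<ge> K \<Longrightarrow> \<bar>suminf h - (\<Sum>j<K'. h j)\<bar> < \<epsilon>"
    using e by (auto simp: lim_sequentially dist_real_def)
  show ?thesis
  proof (intro exI allI impI)
    fix F :: "nat set" assume F: "finite F" "F \<subseteq> {K..}"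
    have inj: "inj_on (\<lambda>j. j - K) F"
      using F by (intro inj_onI) (metis atLeast_iff le_add_diff_inverse2 subsetD)
    have "(\<Sum>j\<in>(\<lambda>j. j - K) ` F. h (j + K)) = (\<Sum>j\<in>F. h (j - K + K))"
      by (rule sum.reindex[OF inj, unfolded comp_def])
    also have "\<dots> = (\<Sum>j\<in>F. h j)" using F by (intro sum.cong) auto
    finally have "(\<Sum>j\<in>F. h j) = (\<Sum>j\<in>(\<lambda>j. j - K) ` F. h (j + K))" by simp
    also have "\<dots> \<le> (\<Sum>j. h (j + K))"
      using sh by (intro sum_le_suminf summable_ignore_initial_segment) (auto simp: F, simp add: h_def)
    also have "\<dots> = suminf h - (\<Sum>j<K. h j)" using sh by (rule suminf_minus_initial_segment)
    also have "\<dots> \<le> \<epsilon>" using K[of K] by simp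
    finally show "(\<Sum>j\<in>F. real j powr p) \<le> \<epsilon>" by (simp add: h_def)
  qed
qed

lemma greedy:
  fixes w :: "nat \<Rightarrow> real" and u :: real
  shows "\<And>m z. (\<forall>k\<in>{m..<m+d}. 0 \<le> w k \<and> w k \<le> u) \<Longrightarrow> \<bar>z\<bar> \<le> (\<Sum>k=m..<m+d. w k) + u \<Longrightarrow>
     \<exists>s. (\<forall>k. s k = 1 \<or> s k = -1) \<and> \<bar>z + (\<Sum>k=m..<m+d. s k * w k)\<bar> \<le> u"
proof (induction d)
  case 0
  then show ?case by (intro exI[of _ "\<lambda>_. 1"]) auto
next
  case (Suc d)
  define sm :: real where "sm = (if 0 \<le> z then -1 else 1)"
  have wm: "0 \<le> w m" "w m \<le> u" using Suc.prems(1) by auto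
  have split: "{m..<m + Suc d} = insert m {Suc m..<Suc m + d}" by auto
  have S0: "0 \<le> (\<Sum>k=Suc m..<Suc m+d. w k)" by (rule sum_nonneg) (use Suc.prems(1) in auto)
  have tot: "(\<Sum>k=m..<m + Suc d. w k) = w m + (\<Sum>k=Suc m..<Suc m+d. w k)" unfolding split by simp
  have "\<bar>z + sm * w m\<bar> \<le> (\<Sum>k=Suc m..<Suc m+d. w k) + u"
  proof (cases "0 \<le> z")
    case True
    then show ?thesis using Suc.prems(2) wm S0 tot unfolding sm_def abs_le_iff by simp
  next
    case False
    then show ?thesis using Suc.prems(2) wm S0 tot unfolding sm_def abs_le_iff by simp
  qed
  moreover have "\<forall>k\<in>{Suc m..<Suc m+d}. 0 \<le> w k \<and> w k \<le> u" using Suc.prems(1) by auto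
  ultimately obtain s where s: "\<forall>k. s k = 1 \<or> s k = -1" "\<bar>z + sm * w m + (\<Sum>k=Suc m..<Suc m+d. s k * w k)\<bar> \<le> u"
    using Suc.IH by blast
  define s' where "s' = s(m := sm)"
  have "(\<Sum>k=Suc m..<Suc m+d. s' k * w k) = (\<Sum>k=Suc m..<Suc m+d. s k * w k)"
    by (intro sum.cong) (auto simp: s'_def)
  then have "z + (\<Sum>k=m..<m + Suc d. s' k * w k) = z + sm * w m + (\<Sum>k=Suc m..<Suc m+d. s k * w k)"
    unfolding split by (simp add: s'_def)
  then show ?case using s by (intro exI[of _ s']) (auto simp: s'_def sm_def)
qed

lemma neg_powr_small:
  fixes q u :: real assumes q: "q < 0" and u: "0 < u"
  shows "\<exists>k0\<ge>2. \<forall>k\<ge>k0. (real k - 1) powr q \<le> u"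
proof -
  have "filterlim (\<lambda>k::nat. real k - 1) at_top sequentially"
    using filterlim_tendsto_add_at_top[OF tendsto_const[of "-1::real"] filterlim_real_sequentially] by simp
  then have "((\<lambda>k::nat. (real k - 1) powr q) \<longlongrightarrow> 0) sequentially"
    by (rule tendsto_neg_powr[OF q])
  then have "eventually (\<lambda>k. (real k - 1) powr q < u) sequentially"
    using u by (auto simp: tendsto_iff dist_real_def)
  then obtain k1 where "\<And>k. k \<ge> k1 \<Longrightarrow> (real k - 1) powr q < u" by (auto simp: eventually_sequentially)
  then show ?thesis by (intro exI[of _ "max 2 k1"]) (auto intro: less_imp_le)
qed




locale rad = prob_space +
  fixes \<xi> :: "nat \<Rightarrow> 'a \<Rightarrow> real"
  assumes ind: "indep_vars (\<lambda>_. borel) \<xi> UNIV"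
    and p1: "\<And>i. prob {\<omega> \<in> space M. \<xi> i \<omega> = 1} = 1/2"
    and pm: "\<And>i. prob {\<omega> \<in> space M. \<xi> i \<omega> = -1} = 1/2"
begin

lemma xi_facts:
  shows xi_meas: "\<xi> i \<in> borel_measurable M"
    and xi_ae: "AE \<omega> in M. \<xi> i \<omega> = 1 \<or> \<xi> i \<omega> = -1"
    and xi_int: "integrable M (\<xi> i)"
    and xi_exp: "expectation (\<xi> i) = 0"
    and xi_sq: "expectation (\<lambda>\<omega>. \<xi> i \<omega> * \<xi> i \<omega>) = 1"
    and xi_sq_int: "integrable M (\<lambda>\<omega>. \<xi> i \<omega> * \<xi> i \<omega>)"
proof -
  show meas: "\<xi> i \<in> borel_measurable M" using ind by (simp add: indep_vars_def)
  have A1: "{\<omega> \<in> space M. \<xi> i \<omega> = 1} \<in> events" using meas by measurable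
  have A2: "{\<omega> \<in> space M. \<xi> i \<omega> = -1} \<in> events" using meas by measurable
  have "prob ({\<omega> \<in> space M. \<xi> i \<omega> = 1} \<union> {\<omega> \<in> space M. \<xi> i \<omega> = -1}) = 1"
    using A1 A2 p1[of i] pm[of i] by (subst finite_measure_Union) auto
  then have "AE \<omega> in M. \<omega> \<in> {\<omega> \<in> space M. \<xi> i \<omega> = 1} \<union> {\<omega> \<in> space M. \<xi> i \<omega> = -1}"
    by (rule AE_prob_1)
  then show ae: "AE \<omega> in M. \<xi> i \<omega> = 1 \<or> \<xi> i \<omega> = -1" by auto
  show int: "integrable M (\<xi> i)"
    by (rule integrable_const_bound[where B=1]) (use ae meas in auto)
  have "AE \<omega> in M. \<xi> i \<omega> = indicator {\<omega> \<in> space M. \<xi> i \<omega> = 1} \<omega> - indicator {\<omega> \<in> space M. \<xi> i \<omega> = -1} \<omega>"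
    using ae AE_space by eventually_elim (auto simp: indicator_def)
  moreover have m2: "(\<lambda>\<omega>. indicator {\<omega> \<in> space M. \<xi> i \<omega> = 1} \<omega> - indicator {\<omega> \<in> space M. \<xi> i \<omega> = -1} \<omega> :: real) \<in> borel_measurable M"
    using A1 A2 by (intro borel_measurable_diff borel_measurable_indicator)
  ultimately have "expectation (\<xi> i) = expectation (\<lambda>\<omega>. indicator {\<omega> \<in> space M. \<xi> i \<omega> = 1} \<omega> - indicator {\<omega> \<in> space M. \<xi> i \<omega> = -1} \<omega> :: real)"
    using integral_cong_AE[OF meas m2] by blast
  also have "\<dots> = prob {\<omega> \<in> space M. \<xi> i \<omega> = 1} - prob {\<omega> \<in> space M. \<xi> i \<omega> = -1}"
    using A1 A2 by (subst Bochner_Integration.integral_diff) (auto intro!: integrable_real_indicator simp: emeasure_eq_measure)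
  finally show "expectation (\<xi> i) = 0" using p1[of i] pm[of i] by simp
  have "AE \<omega> in M. \<xi> i \<omega> * \<xi> i \<omega> = 1" using ae by eventually_elim auto
  moreover have m3: "(\<lambda>\<omega>. \<xi> i \<omega> * \<xi> i \<omega>) \<in> borel_measurable M" using meas by measurable
  ultimately have "expectation (\<lambda>\<omega>. \<xi> i \<omega> * \<xi> i \<omega>) = expectation (\<lambda>\<omega>. 1)"
    using integral_cong_AE[OF m3 borel_measurable_const[of "1::real"]] by blast
  then show "expectation (\<lambda>\<omega>. \<xi> i \<omega> * \<xi> i \<omega>) = 1" by (simp add: prob_space)
  show "integrable M (\<lambda>\<omega>. \<xi> i \<omega> * \<xi> i \<omega>)"
    by (rule integrable_const_bound[where B=1]) (use ae meas in auto)
qed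


lemma cov0:
  assumes "i \<noteq> j"
  shows "expectation (\<lambda>\<omega>. \<xi> i \<omega> * \<xi> j \<omega>) = 0"
proof -
  have ij: "indep_vars (\<lambda>_. borel) \<xi> {i, j}" by (rule indep_vars_subset[OF ind]) auto
  have "expectation (\<lambda>\<omega>. \<Prod>k\<in>{i,j}. \<xi> k \<omega>) = (\<Prod>k\<in>{i,j}. expectation (\<xi> k))"
    by (rule indep_vars_lebesgue_integral[OF _ ij]) (auto intro: xi_int)
  then show ?thesis using assms by (simp add: xi_exp)
qed

lemma prod_int: "integrable M (\<lambda>\<omega>. \<xi> i \<omega> * \<xi> j \<omega>)"
proof (rule integrable_const_bound[where B=1])
  show "AE \<omega> in M. norm (\<xi> i \<omega> * \<xi> j \<omega>) \<le> 1"
    using xi_ae[of i] xi_ae[of j] by eventually_elim auto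
  show "(\<lambda>\<omega>. \<xi> i \<omega> * \<xi> j \<omega>) \<in> borel_measurable M" using xi_meas[of i] xi_meas[of j] by measurable
qed

lemma second_moment:
  fixes w :: "nat \<Rightarrow> real" assumes R: "finite R"
  shows "integrable M (\<lambda>\<omega>. (\<Sum>i\<in>R. w i * \<xi> i \<omega>)^2)"
    and "expectation (\<lambda>\<omega>. (\<Sum>i\<in>R. w i * \<xi> i \<omega>)^2) = (\<Sum>i\<in>R. (w i)^2)"
proof -
  have eq: "(\<lambda>\<omega>. (\<Sum>i\<in>R. w i * \<xi> i \<omega>)^2) = (\<lambda>\<omega>. \<Sum>i\<in>R. \<Sum>j\<in>R. (w i * w j) * (\<xi> i \<omega> * \<xi> j \<omega>))"
    by (simp add: power2_eq_square sum_product algebra_simps)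
  show "integrable M (\<lambda>\<omega>. (\<Sum>i\<in>R. w i * \<xi> i \<omega>)^2)"
    unfolding eq by (intro Bochner_Integration.integrable_sum integrable_mult_right prod_int)
  have "expectation (\<lambda>\<omega>. (\<Sum>i\<in>R. w i * \<xi> i \<omega>)^2) = (\<Sum>i\<in>R. \<Sum>j\<in>R. (w i * w j) * expectation (\<lambda>\<omega>. \<xi> i \<omega> * \<xi> j \<omega>))"
    unfolding eq by (simp add: Bochner_Integration.integral_sum prod_int)
  also have "\<dots> = (\<Sum>i\<in>R. \<Sum>j\<in>R. if i = j then (w i)^2 else 0)"
    by (intro sum.cong refl) (auto simp: cov0 xi_sq power2_eq_square)
  also have "\<dots> = (\<Sum>i\<in>R. (w i)^2)" using R by (simp add: sum.delta)
  finally show "expectation (\<lambda>\<omega>. (\<Sum>i\<in>R. w i * \<xi> i \<omega>)^2) = (\<Sum>i\<in>R. (w i)^2)" .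
qed

lemma cheb:
  fixes w :: "nat \<Rightarrow> real" assumes R: "finite R" and r: "0 < r"
  shows "prob {\<omega> \<in> space M. r \<le> \<bar>\<Sum>i\<in>R. w i * \<xi> i \<omega>\<bar>} \<le> (\<Sum>i\<in>R. (w i)^2) / r^2"
proof -
  have m: "(\<lambda>\<omega>. \<Sum>i\<in>R. w i * \<xi> i \<omega>) \<in> borel_measurable M"
    using xi_meas by measurable
  show ?thesis
    using second_moment_method[OF m second_moment(1)[OF R] r] second_moment(2)[OF R] by simp
qed


lemma pattern:
  assumes S: "finite S" and s: "\<forall>i. s i = 1 \<or> s i = -1"
  shows "prob {\<omega> \<in> space M. \<forall>i\<in>S. \<xi> i \<omega> = s i} = (1/2)^card S"
proof (cases "S = {}")
  case True then show ?thesis by (simp add: prob_space)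
next
  case False
  have "{\<omega> \<in> space M. \<forall>i\<in>S. \<xi> i \<omega> = s i} = (\<Inter>i\<in>S. \<xi> i -` {s i} \<inter> space M)"
    using False by auto
  moreover have "prob (\<Inter>i\<in>S. \<xi> i -` {s i} \<inter> space M) = (\<Prod>i\<in>S. prob (\<xi> i -` {s i} \<inter> space M))"
    by (rule indep_varsD[OF ind False S]) auto
  moreover have "prob (\<xi> i -` {s i} \<inter> space M) = 1/2" for i
  proof -
    have "\<xi> i -` {s i} \<inter> space M = {\<omega> \<in> space M. \<xi> i \<omega> = s i}" by auto
    then show ?thesis using s[rule_format, of i] p1[of i] pm[of i] by auto
  qed
  ultimately show ?thesis by simp
qed

lemma block:
  fixes w :: "nat \<Rightarrow> real"
  assumes S: "finite S" and R: "finite R" and SR: "S \<inter> R = {}" and Q: "Q \<in> sets borel"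
  shows "prob {\<omega> \<in> space M. (\<forall>i\<in>S. \<xi> i \<omega> = s i) \<and> (\<Sum>i\<in>R. w i * \<xi> i \<omega>) \<in> Q} =
    prob {\<omega> \<in> space M. \<forall>i\<in>S. \<xi> i \<omega> = s i} * prob {\<omega> \<in> space M. (\<Sum>i\<in>R. w i * \<xi> i \<omega>) \<in> Q}"
proof -
  define K where "K b = (if b then S else R)" for b :: bool
  have ind2: "indep_vars (\<lambda>b. PiM (K b) (\<lambda>_. borel)) (\<lambda>b \<omega>. restrict (\<lambda>i. \<xi> i \<omega>) (K b)) UNIV"
    by (rule indep_vars_restrict[OF ind]) (use SR in \<open>auto simp: disjoint_family_on_def K_def\<close>)
  define C where "C b = (if b then PiE S (\<lambda>i. {s i}) else (\<lambda>f. \<Sum>i\<in>R. w i * f i) -` Q \<inter> space (PiM R (\<lambda>_. borel)))" for b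
  have Csets: "C b \<in> sets (PiM (K b) (\<lambda>_. borel))" for b
  proof (cases b)
    case True
    then show ?thesis unfolding C_def K_def using S by (auto intro!: sets_PiM_I_finite)
  next
    case False
    have "(\<lambda>f. \<Sum>i\<in>R. w i * f i) \<in> borel_measurable (PiM R (\<lambda>_. borel))"
      by (intro borel_measurable_sum borel_measurable_times borel_measurable_const measurable_component_singleton) auto
    then show ?thesis unfolding C_def K_def using False Q by (auto intro: measurable_sets)
  qed
  have "prob (\<Inter>b\<in>UNIV. (\<lambda>\<omega>. restrict (\<lambda>i. \<xi> i \<omega>) (K b)) -` C b \<inter> space M) =
        (\<Prod>b\<in>UNIV. prob ((\<lambda>\<omega>. restrict (\<lambda>i. \<xi> i \<omega>) (K b)) -` C b \<inter> space M))"
    by (rule indep_varsD[OF ind2]) (auto simp: Csets)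
  moreover have "(\<lambda>\<omega>. restrict (\<lambda>i. \<xi> i \<omega>) (K True)) -` C True \<inter> space M = {\<omega> \<in> space M. \<forall>i\<in>S. \<xi> i \<omega> = s i}"
    by (auto simp: K_def C_def PiE_iff)
  moreover have "(\<lambda>\<omega>. restrict (\<lambda>i. \<xi> i \<omega>) (K False)) -` C False \<inter> space M = {\<omega> \<in> space M. (\<Sum>i\<in>R. w i * \<xi> i \<omega>) \<in> Q}"
    by (auto simp: K_def C_def space_PiM)
  moreover have "(\<Inter>b\<in>UNIV. (\<lambda>\<omega>. restrict (\<lambda>i. \<xi> i \<omega>) (K b)) -` C b \<inter> space M) =
      {\<omega> \<in> space M. (\<forall>i\<in>S. \<xi> i \<omega> = s i) \<and> (\<Sum>i\<in>R. w i * \<xi> i \<omega>) \<in> Q}"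
    unfolding UNIV_bool using calculation(2,3) by auto
  ultimately show ?thesis by (simp add: UNIV_bool)
qed


definition Asig :: "nat \<Rightarrow> 'a set set" where
  "Asig i = sigma_sets (space M) {\<xi> i -` B \<inter> space M | B. B \<in> sets borel}"

lemma Asig_Pow: "{\<xi> i -` B \<inter> space M | B. B \<in> sets borel} \<subseteq> Pow (space M)" by auto

lemma Asig_events: "Asig i \<subseteq> events"
  unfolding Asig_def
  by (rule sets.sigma_sets_subset) (use xi_meas[of i] in \<open>auto intro: measurable_sets\<close>)

lemma gen_Pow: "\<Union> (Asig ` J) \<subseteq> Pow (space M)"
  using Asig_events sets.sets_into_space by blast

lemma sig_events: "sigma_sets (space M) (\<Union> (Asig ` J)) \<subseteq> events"
  by (rule sets.sigma_sets_subset) (use Asig_events in auto)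

lemma io_one:
  fixes Q :: "nat \<Rightarrow> 'a \<Rightarrow> bool" and lo :: "nat \<Rightarrow> nat"
  assumes lo: "\<And>m. \<exists>k0. \<forall>k\<ge>k0. m \<le> lo k"
    and tailm: "\<And>k m. m \<le> lo k \<Longrightarrow> {\<omega> \<in> space M. Q k \<omega>} \<in> sigma_sets (space M) (\<Union> (Asig ` {m..}))"
    and pb: "\<And>k. k1 \<le> k \<Longrightarrow> c \<le> prob {\<omega> \<in> space M. Q k \<omega>}" and c: "0 < c"
  shows "prob {\<omega> \<in> space M. \<forall>m. \<exists>k\<ge>m. Q k \<omega>} = 1"
proof -
  define E where "E k = {\<omega> \<in> space M. Q k \<omega>}" for k
  have Eev: "E k \<in> events" for k using tailm[of 0 k] sig_events[of "{0..}"] by (auto simp: E_def)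
  define U where "U j = (\<Union>k\<in>{j..}. E k)" for j
  have X: "{\<omega> \<in> space M. \<forall>m. \<exists>k\<ge>m. Q k \<omega>} = (\<Inter>j. U j)"
    by (auto simp: U_def E_def)
  have Uev: "U j \<in> events" for j unfolding U_def using Eev by auto
  have "(\<lambda>j. prob (U j)) \<longlonglongrightarrow> prob (\<Inter>j. U j)"
  proof (rule finite_Lim_measure_decseq)
    show "range U \<subseteq> events" using Uev by auto
    show "decseq U" unfolding decseq_def U_def
      by (auto, metis atLeast_iff order_trans)
  qed
  moreover have "\<forall>j\<ge>0. c \<le> prob (U j)"
  proof (intro allI impI)
    fix j :: nat
    have "c \<le> prob (E (max j k1))" using pb[of "max j k1"] by (simp add: E_def)
    also have "\<dots> \<le> prob (U j)" using Uev by (intro finite_measure_mono) (auto simp: U_def intro!: bexI[of _ "max j k1"])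
    finally show "c \<le> prob (U j)" .
  qed
  ultimately have cX: "c \<le> prob (\<Inter>j. U j)" by (intro LIMSEQ_le_const) auto
  have sa: "sigma_algebra (space M) (Asig i)" for i unfolding Asig_def by (rule sigma_algebra_sigma_sets[OF Asig_Pow])
  have indA: "indep_sets Asig UNIV" using ind unfolding indep_vars_def Asig_def by simp
  have tail: "(\<Inter>j. U j) \<in> tail_events Asig"
    unfolding tail_events_def
  proof (intro InterI, clarsimp)
    fix m
    obtain k0 where k0: "\<And>k. k \<ge> k0 \<Longrightarrow> m \<le> lo k" using lo[of m] by auto
    have "(\<Inter>j. U j) = (\<Inter>j. \<Union>k\<in>{max j k0..}. E k)"
    proof (intro equalityI subsetI)
      fix \<omega> assume "\<omega> \<in> (\<Inter>j. U j)"
      then have "\<forall>j. \<exists>k\<ge>j. \<omega> \<in> E k" by (auto simp: U_def)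
      then have h: "\<exists>k\<ge>max j k0. \<omega> \<in> E k" for j by blast
      show "\<omega> \<in> (\<Inter>j. \<Union>k\<in>{max j k0..}. E k)"
      proof (intro INT_I)
        fix j
        obtain k where "k \<ge> max j k0" "\<omega> \<in> E k" using h[of j] by blast
        then show "\<omega> \<in> (\<Union>k\<in>{max j k0..}. E k)" by blast
      qed
    next
      fix \<omega> assume "\<omega> \<in> (\<Inter>j. \<Union>k\<in>{max j k0..}. E k)"
      then have h: "\<exists>k\<in>{max j k0..}. \<omega> \<in> E k" for j by blast
      show "\<omega> \<in> (\<Inter>j. U j)"
      proof (intro INT_I)
        fix j
        obtain k where "k \<ge> max j k0" "\<omega> \<in> E k" using h[of j] by auto
        then show "\<omega> \<in> U j" unfolding U_def by auto
      qed
    qed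
    also have "\<dots> \<in> sigma_sets (space M) (\<Union> (Asig ` {m..}))"
    proof (rule sigma_sets_Inter[OF gen_Pow])
      fix j
      show "(\<Union>k\<in>{max j k0..}. E k) \<in> sigma_sets (space M) (\<Union> (Asig ` {m..}))"
      proof (rule sigma_sets_UNION)
        show "countable (E ` {max j k0..})" by simp
        fix b assume "b \<in> E ` {max j k0..}"
        then obtain k where k: "k \<ge> max j k0" "b = E k" by auto
        have "m \<le> lo k" using k0 k(1) by simp
        then show "b \<in> sigma_sets (space M) (\<Union> (Asig ` {m..}))" unfolding k(2) E_def by (rule tailm)
      qed
    qed
    finally show "(\<Inter>j. U j) \<in> sigma_sets (space M) (\<Union> (Asig ` {m..}))" .
  qed
  have "prob (\<Inter>j. U j) = 0 \<or> prob (\<Inter>j. U j) = 1"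
    by (rule kolmogorov_0_1_law[OF sa indA tail])
  then show ?thesis using cX c X by auto
qed

lemma xi_meas_tail:
  assumes "m \<le> i"
  shows "\<xi> i \<in> borel_measurable (sigma (space M) (\<Union> (Asig ` {m..})))"
proof (rule measurableI)
  fix B :: "real set" assume B: "B \<in> sets borel"
  have "\<xi> i -` B \<inter> space M \<in> Asig i" unfolding Asig_def using B by (intro sigma_sets.Basic) auto
  then have "\<xi> i -` B \<inter> space M \<in> \<Union> (Asig ` {m..})" using assms by auto
  then show "\<xi> i -` B \<inter> space (sigma (space M) (\<Union> (Asig ` {m..}))) \<in> sets (sigma (space M) (\<Union> (Asig ` {m..})))"
    using gen_Pow by (simp add: space_measure_of_conv sets_measure_of_conv)
qed (auto)

end




lemma sum_reflect:
  fixes f :: "nat \<Rightarrow> real"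
  assumes "b \<le> n" "a \<le> b"
  shows "(\<Sum>i=n-b..n-a. f (n - i)) = (\<Sum>k=a..b. f k)"
proof (rule sum.reindex_bij_witness[where i="\<lambda>k. n - k" and j="\<lambda>i. n - i"])
qed (use assms in auto)

context rad begin

lemma Y_tail_set:
  fixes Q :: "real set"
  assumes m: "m \<le> iH H n" and Q: "Q \<in> sets borel"
  shows "{\<omega> \<in> space M. Yhat \<sigma> H \<xi> n \<omega> \<in> Q} \<in> sigma_sets (space M) (\<Union> (Asig ` {m..}))"
proof -
  let ?N = "sigma (space M) (\<Union> (Asig ` {m..}))"
  have "(\<lambda>\<omega>. Yhat \<sigma> H \<xi> n \<omega>) \<in> borel_measurable ?N"
    unfolding Yhat_def
    by (intro borel_measurable_sum borel_measurable_times borel_measurable_const xi_meas_tail) (use m in auto)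
  from measurable_sets[OF this Q] show ?thesis
    using gen_Pow by (simp add: space_measure_of_conv sets_measure_of_conv vimage_def Int_def conj_commute)
qed


lemma jH_eq: "jH \<sigma> H n i = (\<sigma> * CH H) * (LBINT x = real i - 1..real i. x powr (1/2 - H) *
        (LBINT v = 0..1. (v + real n - 1) powr (H - 1/2) * (v + real n - 1 - x) powr (H - 3/2)))"
  by (simp add: jH_def)

lemma gH_eq: "gH \<sigma> H n = (\<sigma> * CH H) * (LBINT x = real n - 1..real n. x powr (1/2 - H) * (real n - x) powr (H - 1/2) *
        (LBINT y = 0..1. (y * (real n - x) + x) powr (H - 1/2) * y powr (H - 3/2)))"
  by (simp add: gH_def)

lemma events_Y:
  assumes Q: "Q \<in> sets borel"
  shows "{\<omega> \<in> space M. Yhat \<sigma> H \<xi> n \<omega> \<in> Q} \<in> events"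
  using Y_tail_set[OF _ Q, of 0 H n] sig_events[of "{0..}"] by auto

lemma events_B:
  fixes w :: "nat \<Rightarrow> real"
  assumes Q: "Q \<in> sets borel"
  shows "{\<omega> \<in> space M. (\<Sum>i\<in>R. w i * \<xi> i \<omega>) \<in> Q} \<in> events"
proof -
  have "(\<lambda>\<omega>. \<Sum>i\<in>R. w i * \<xi> i \<omega>) \<in> borel_measurable M" using xi_meas by measurable
  from measurable_sets[OF this Q] show ?thesis by (simp add: vimage_def Int_def conj_commute)
qed

lemma events_pat: "{\<omega> \<in> space M. (\<forall>i\<in>S. \<xi> i \<omega> = s i) \<and> P \<omega>} \<in> events"
  if "finite S" "{\<omega> \<in> space M. P \<omega>} \<in> events" for S s P
proof -
  have "{\<omega> \<in> space M. (\<forall>i\<in>S. \<xi> i \<omega> = s i) \<and> P \<omega>} = {\<omega> \<in> space M. (\<forall>i\<in>S. \<xi> i \<omega> = s i)} \<inter> {\<omega> \<in> space M. P \<omega>}"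
    by auto
  moreover have "{\<omega> \<in> space M. (\<forall>i\<in>S. \<xi> i \<omega> = s i)} \<in> events"
    using that(1) xi_meas by measurable
  ultimately show ?thesis using that(2) by auto
qed

lemma part2_prob:
  assumes H: "1/2 < H" "H < 1" and sg: "0 < \<sigma>"
  shows "\<exists>N0 q. 0 < q \<and> (\<forall>n\<ge>N0. q \<le> prob {\<omega> \<in> space M. gH \<sigma> H n * (1 + 1) < \<bar>Yhat \<sigma> H \<xi> n \<omega>\<bar>})"
proof -
  define c where "c = \<sigma> * CH H"
  have c: "0 < c" using CH_pos[OF H] sg by (simp add: c_def)
  define f where "f k = (real k + 1) powr (H - 3/2)" for k :: nat
  obtain K where K: "8 * I0 H < (\<Sum>k=2..K. f k)" using diverge[OF H(1)] unfolding f_def by blast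
  have K2: "2 \<le> K"
  proof (rule ccontr)
    assume "\<not> 2 \<le> K"
    then have "(\<Sum>k=2..K. f k) = 0" by simp
    then show False using K I0_nonneg[of H] by simp
  qed
  define N0 where "N0 = 3 * K + 3"
  show ?thesis
  proof (intro exI conjI allI impI)
    show "0 < (1/2::real) ^ (K - 1)" by simp
    fix n assume n: "N0 \<le> n"
    define lo where "lo = iH H n"
    have n2: "2 \<le> n" using n K2 by (simp add: N0_def)
    have "real lo \<le> 2/3 * (real n - 1) + 1" using iH_bounds(2)[OF H n2] by (simp add: lo_def)
    moreover have "real N0 \<le> real n" using n by simp
    ultimately have "real lo \<le> real n - real K" by (simp add: N0_def field_simps)
    then have lo_le: "lo \<le> n - K" using n by (simp add: N0_def)
    define S where "S = {n-K..n-2}"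
    define R where "R = {lo..n-1} - S"
    have SR: "S \<subseteq> {lo..n-1}" using lo_le K2 by (auto simp: S_def)
    have finS: "finite S" and finR: "finite R" and disj: "S \<inter> R = {}" by (auto simp: S_def R_def)
    have Sne: "n - K \<in> S" using K2 by (simp add: S_def)
    have cardS: "card S = K - 1" using K2 n by (simp add: S_def N0_def)
    have Ysplit: "Yhat \<sigma> H \<xi> n \<omega> = (\<Sum>i\<in>S. jH \<sigma> H n i * \<xi> i \<omega>) + (\<Sum>i\<in>R. jH \<sigma> H n i * \<xi> i \<omega>)" for \<omega>
      unfolding Yhat_def lo_def[symmetric] R_def
      using sum.subset_diff[OF SR finite_atLeastAtMost, of "\<lambda>i. jH \<sigma> H n i * \<xi> i \<omega>"] by (simp add: add.commute)
    have jlb: "c * ((1/2) * f (n - i)) \<le> jH \<sigma> H n i" if i: "i \<in> S" for i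
    proof -
      have i2: "2 \<le> i" "i + 2 \<le> n" using i n K2 by (auto simp: S_def N0_def)
      have "1/2 \<le> (real n - 1) / real n" using n2 by (simp add: field_simps)
      then have "(1/2) * f (n - i) \<le> (real n - 1) / real n * f (n - i)"
        by (intro mult_right_mono) (auto simp: f_def)
      also have "\<dots> \<le> (LBINT x = real i - 1..real i. x powr (1/2 - H) *
        (LBINT v = 0..1. (v + real n - 1) powr (H - 1/2) * (v + real n - 1 - x) powr (H - 3/2)))"
        unfolding f_def by (rule j_lower[OF H i2])
      finally show ?thesis unfolding jH_eq c_def[symmetric] using c by (intro mult_left_mono) auto
    qed
    have "c * ((1/2) * (\<Sum>k=2..K. f k)) = c * ((1/2) * (\<Sum>i=n-K..n-2. f (n - i)))"
      using sum_reflect[of K n 2 f] K2 n by (simp add: N0_def)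
    also have "\<dots> = (\<Sum>i\<in>S. c * ((1/2) * f (n - i)))" by (simp add: S_def sum_distrib_left)
    also have "\<dots> \<le> (\<Sum>i\<in>S. jH \<sigma> H n i)" by (rule sum_mono) (rule jlb)
    finally have wS: "c * ((1/2) * (\<Sum>k=2..K. f k)) \<le> (\<Sum>i\<in>S. jH \<sigma> H n i)" .
    have "c * ((1/2) * (8 * I0 H)) < c * ((1/2) * (\<Sum>k=2..K. f k))" using K c by simp
    moreover have "gH \<sigma> H n \<le> c * (2 * I0 H)"
      unfolding gH_eq c_def[symmetric] using g_bounds(2)[OF H n2] c by (intro mult_left_mono) auto
    ultimately have big: "gH \<sigma> H n * (1 + 1) < (\<Sum>i\<in>S. jH \<sigma> H n i)" using wS by simp
    define Bv where "Bv \<omega> = (\<Sum>i\<in>R. jH \<sigma> H n i * \<xi> i \<omega>)" for \<omega>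
    define E where "E = {\<omega> \<in> space M. gH \<sigma> H n * (1 + 1) < \<bar>Yhat \<sigma> H \<xi> n \<omega>\<bar>}"
    define Tp where "Tp = {\<omega> \<in> space M. (\<forall>i\<in>S. \<xi> i \<omega> = (\<lambda>_. 1) i) \<and> Bv \<omega> \<in> {0..}}"
    define Tm where "Tm = {\<omega> \<in> space M. (\<forall>i\<in>S. \<xi> i \<omega> = (\<lambda>_. -1) i) \<and> Bv \<omega> \<in> {..0}}"
    have Eev: "E \<in> events"
    proof -
      have "{x::real. gH \<sigma> H n * (1 + 1) < \<bar>x\<bar>} \<in> sets borel" by measurable
      from events_Y[OF this, of \<sigma> H n] show ?thesis by (simp add: E_def)
    qed
    have Bev: "{\<omega> \<in> space M. Bv \<omega> \<in> Q} \<in> events" if "Q \<in> sets borel" for Q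
      unfolding Bv_def by (rule events_B[OF that])
    have Tpev: "Tp \<in> events" unfolding Tp_def by (rule events_pat[OF finS Bev]) simp
    have Tmev: "Tm \<in> events" unfolding Tm_def by (rule events_pat[OF finS Bev]) simp
    have TpE: "Tp \<subseteq> E"
    proof
      fix \<omega> assume "\<omega> \<in> Tp"
      then have w: "\<omega> \<in> space M" "\<And>i. i \<in> S \<Longrightarrow> \<xi> i \<omega> = 1" "0 \<le> Bv \<omega>" by (auto simp: Tp_def)
      have "Yhat \<sigma> H \<xi> n \<omega> = (\<Sum>i\<in>S. jH \<sigma> H n i) + Bv \<omega>"
        unfolding Ysplit Bv_def using w(2) by simp
      then show "\<omega> \<in> E" using big w by (simp add: E_def)
    qed
    have TmE: "Tm \<subseteq> E"
    proof
      fix \<omega> assume "\<omega> \<in> Tm"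
      then have w: "\<omega> \<in> space M" "\<And>i. i \<in> S \<Longrightarrow> \<xi> i \<omega> = -1" "Bv \<omega> \<le> 0" by (auto simp: Tm_def)
      have "(\<Sum>i\<in>S. jH \<sigma> H n i * \<xi> i \<omega>) = - (\<Sum>i\<in>S. jH \<sigma> H n i)"
        using w(2) by (simp add: sum_negf[symmetric])
      then have "Yhat \<sigma> H \<xi> n \<omega> = - (\<Sum>i\<in>S. jH \<sigma> H n i) + Bv \<omega>"
        unfolding Ysplit Bv_def by simp
      then show "\<omega> \<in> E" using big w by (simp add: E_def)
    qed
    have dis: "Tp \<inter> Tm = {}" using Sne by (auto simp: Tp_def Tm_def)
    have pTp: "prob Tp = (1/2)^card S * prob {\<omega> \<in> space M. Bv \<omega> \<in> {0..}}"
      unfolding Tp_def Bv_def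
      by (subst block[OF finS finR disj]) (simp_all add: pattern[OF finS])
    have pTm: "prob Tm = (1/2)^card S * prob {\<omega> \<in> space M. Bv \<omega> \<in> {..0}}"
      unfolding Tm_def Bv_def
      by (subst block[OF finS finR disj]) (simp_all add: pattern[OF finS])
    have B1: "{\<omega> \<in> space M. Bv \<omega> \<in> {0..}} \<in> events" by (rule Bev) simp
    have B2: "{\<omega> \<in> space M. Bv \<omega> \<in> {..<0}} \<in> events" by (rule Bev) simp
    have B3: "{\<omega> \<in> space M. Bv \<omega> \<in> {..0}} \<in> events" by (rule Bev) simp
    have "prob {\<omega> \<in> space M. Bv \<omega> \<in> {0..}} + prob {\<omega> \<in> space M. Bv \<omega> \<in> {..<0}} = prob (space M)"
    proof -
      have "{\<omega> \<in> space M. Bv \<omega> \<in> {0..}} \<union> {\<omega> \<in> space M. Bv \<omega> \<in> {..<0}} = space M" by auto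
      moreover have "prob ({\<omega> \<in> space M. Bv \<omega> \<in> {0..}} \<union> {\<omega> \<in> space M. Bv \<omega> \<in> {..<0}}) =
         prob {\<omega> \<in> space M. Bv \<omega> \<in> {0..}} + prob {\<omega> \<in> space M. Bv \<omega> \<in> {..<0}}"
        by (rule finite_measure_Union[OF B1 B2]) auto
      ultimately show ?thesis by simp
    qed
    moreover have "prob {\<omega> \<in> space M. Bv \<omega> \<in> {..<0}} \<le> prob {\<omega> \<in> space M. Bv \<omega> \<in> {..0}}"
      by (rule finite_measure_mono[OF _ B3]) auto
    ultimately have one: "1 \<le> prob {\<omega> \<in> space M. Bv \<omega> \<in> {0..}} + prob {\<omega> \<in> space M. Bv \<omega> \<in> {..0}}"
      by (simp add: prob_space)
    have "(1/2::real)^(K-1) \<le> (1/2)^card S * (prob {\<omega> \<in> space M. Bv \<omega> \<in> {0..}} + prob {\<omega> \<in> space M. Bv \<omega> \<in> {..0}})"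
      using one cardS by (simp add: mult_le_cancel_left1)
    also have "\<dots> = prob Tp + prob Tm" by (simp add: pTp pTm distrib_left)
    also have "\<dots> = prob (Tp \<union> Tm)" using dis Tpev Tmev by (simp add: finite_measure_Union)
    also have "\<dots> \<le> prob E" using TpE TmE Eev by (intro finite_measure_mono) auto
    finally show "(1/2::real)^(K-1) \<le> prob {\<omega> \<in> space M. gH \<sigma> H n * (1 + 1) < \<bar>Yhat \<sigma> H \<xi> n \<omega>\<bar>}"
      by (simp add: E_def)
  qed
qed


lemma jH_nonneg: "0 < \<sigma> * CH H \<Longrightarrow> 0 \<le> jH \<sigma> H n i"
  unfolding jH_eq
  by (rule mult_nonneg_nonneg[OF less_imp_le], assumption, rule lbint_nonneg) (auto intro!: mult_nonneg_nonneg lbint01_nonneg)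

lemma part1_prob:
  assumes H: "1/2 < H" "H < 1" and sg: "0 < \<sigma>"
  shows "\<exists>N0 q. 0 < q \<and> (\<forall>n\<ge>N0. q \<le> prob {\<omega> \<in> space M. \<bar>Yhat \<sigma> H \<xi> n \<omega>\<bar> \<le> gH \<sigma> H n * (1 - 1/2)})"
proof -
  define c where "c = \<sigma> * CH H"
  have c: "0 < c" using CH_pos[OF H] sg by (simp add: c_def)
  define a where "a = H - 1/2"
  have a: "0 < a" "a < 1/2" using H by (auto simp: a_def)
  define c0 where "c0 = a / 2"
  have c0: "0 < c0" using a by (simp add: c0_def)
  define D where "D = c0 powr (1/2 - H)"
  have D: "0 < D" using c0 by (simp add: D_def)
  define u where "u = c / 16"
  have u: "0 < u" using c by (simp add: u_def)
  define f where "f k = (real k + 1) powr (H - 3/2)" for k :: nat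
  have f0: "0 \<le> f k" for k by (simp add: f_def)
  obtain k0 where k0: "2 \<le> k0" "\<And>k. k0 \<le> k \<Longrightarrow> (real k - 1) powr (H - 3/2) \<le> u / (c * D)"
    using neg_powr_small[of "H - 3/2" "u / (c * D)"] H u c D by auto
  have wsmall: "c * D * Wt H k \<le> u" if "k0 \<le> k" for k
  proof -
    have "k \<noteq> 1" using that k0 by auto
    then have "c * D * Wt H k = (c * D) * (real k - 1) powr (H - 3/2)" by (simp add: Wt_def)
    also have "\<dots> \<le> (c * D) * (u / (c * D))" using k0(2)[OF that] c D by (intro mult_left_mono) auto
    also have "\<dots> = u" using c D by simp
    finally show ?thesis .
  qed
  define Z where "Z = (\<Sum>k=1..k0-1. c * D * Wt H k)"
  have Z0: "0 \<le> Z" unfolding Z_def using c D Wt_nonneg by (intro sum_nonneg) simp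
  obtain K1 where K1: "2 * Z / c + (\<Sum>k=2..k0-1. f k) < (\<Sum>k=2..K1. f k)"
    using diverge[OF H(1)] unfolding f_def by blast
  have K1k0: "k0 \<le> K1"
  proof (rule ccontr)
    assume "\<not> k0 \<le> K1"
    then have "(\<Sum>k=2..K1. f k) \<le> (\<Sum>k=2..k0-1. f k)" using f0 by (intro sum_mono2) auto
    moreover have "0 \<le> 2 * Z / c" using Z0 c by simp
    ultimately show False using K1 by linarith
  qed
  have sumK1: "Z \<le> c / 2 * (\<Sum>k=k0..K1. f k)"
  proof -
    have "{2..K1} = {2..k0-1} \<union> {k0..K1}" using k0 K1k0 by auto
    then have "(\<Sum>k=2..K1. f k) = (\<Sum>k=2..k0-1. f k) + (\<Sum>k=k0..K1. f k)"
      by (simp add: sum.union_disjoint)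
    then have "2 * Z / c < (\<Sum>k=k0..K1. f k)" using K1 by linarith
    then show ?thesis using c by (simp add: field_simps)
  qed
  define \<epsilon> where "\<epsilon> = u^2 / (2 * (c * D)^2)"
  have \<epsilon>: "0 < \<epsilon>" using u c D by (simp add: \<epsilon>_def)
  obtain K2 where K2: "\<And>F. finite F \<Longrightarrow> F \<subseteq> {K2..} \<Longrightarrow> (\<Sum>j\<in>F. real j powr (2*H - 3)) \<le> \<epsilon>"
    using tail_small[of "2*H - 3" \<epsilon>] H \<epsilon> by auto
  define K where "K = max K1 K2"
  have Kk0: "k0 \<le> K" using K1k0 by (simp add: K_def)
  define N0 where "N0 = 3 * K + 3 + nat \<lceil>4 / a\<rceil>"
  show ?thesis
  proof (intro exI conjI allI impI)
    show "0 < (1/2::real) ^ K / 2" by simp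
    fix n assume n: "N0 \<le> n"
    define lo where "lo = iH H n"
    have n2: "2 \<le> n" using n k0 Kk0 by (simp add: N0_def)
    have nK: "3 * K + 3 \<le> n" using n by (simp add: N0_def)
    have na: "4 / a \<le> real n"
    proof -
      have "4 / a \<le> real (nat \<lceil>4 / a\<rceil>)" by (rule real_nat_ceiling_ge)
      moreover have "nat \<lceil>4 / a\<rceil> \<le> n" using n unfolding N0_def by linarith
      ultimately show ?thesis by linarith
    qed
    have "real lo \<le> 2/3 * (real n - 1) + 1" using iH_bounds(2)[OF H n2] by (simp add: lo_def)
    then have "real lo \<le> real n - real K" using nK by (simp add: field_simps)
    then have lo_le: "lo \<le> n - K" using nK by simp
    have lo_ge: "c0 * real n \<le> real lo - 1"
    proof -
      have "a * real n - 1 \<le> real lo" using iH_bounds(1)[OF H n2] by (simp add: lo_def a_def)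
      moreover have "4 \<le> a * real n" using na a by (simp add: field_simps)
      ultimately show ?thesis by (simp add: c0_def)
    qed
    have lo2: "2 \<le> lo"
    proof -
      have "0 < c0 * real n" using c0 n2 by simp
      then show ?thesis using lo_ge by linarith
    qed
    have wnn: "0 \<le> jH \<sigma> H n i" for i using c by (intro jH_nonneg) (simp add: c_def)
    have wub: "jH \<sigma> H n i \<le> c * D * Wt H (n - i)" if i: "lo \<le> i" "i < n" for i
    proof -
      have "c0 * real n \<le> real i - 1" using lo_ge i by linarith
      then have "(LBINT x = real i - 1..real i. x powr (1/2 - H) *
        (LBINT v = 0..1. (v + real n - 1) powr (H - 1/2) * (v + real n - 1 - x) powr (H - 3/2))) \<le> c0 powr (1/2 - H) * Wt H (n - i)"
        using i lo2 by (intro j_upper[OF H _ _ c0]) auto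
      then show ?thesis unfolding jH_eq c_def[symmetric] D_def using c by (simp add: mult.assoc mult_left_mono)
    qed
    have wlb: "c * ((1/2) * f (n - i)) \<le> jH \<sigma> H n i" if i: "2 \<le> i" "i + 2 \<le> n" for i
    proof -
      have "1/2 \<le> (real n - 1) / real n" using n2 by (simp add: field_simps)
      then have "(1/2) * f (n - i) \<le> (real n - 1) / real n * f (n - i)"
        by (intro mult_right_mono) (auto simp: f_def)
      also have "\<dots> \<le> (LBINT x = real i - 1..real i. x powr (1/2 - H) *
        (LBINT v = 0..1. (v + real n - 1) powr (H - 1/2) * (v + real n - 1 - x) powr (H - 3/2)))"
        unfolding f_def by (rule j_lower[OF H i])
      finally show ?thesis unfolding jH_eq c_def[symmetric] using c by (intro mult_left_mono) auto
    qed
    define S1 where "S1 = {n - (k0 - 1)..n-1}"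
    define S2 where "S2 = {n - K..<n - K + (K - k0 + 1)}"
    define S where "S = {n - K..n-1}"
    have S2eq: "S2 = {n - K..n - k0}" using Kk0 nK k0 by (auto simp: S2_def)
    have S12: "S = S1 \<union> S2" "S1 \<inter> S2 = {}" using Kk0 nK k0 by (auto simp: S_def S1_def S2eq)
    have SR: "S \<subseteq> {lo..n-1}" using lo_le Kk0 k0 by (auto simp: S_def)
    have finS: "finite S" by (simp add: S_def)
    have cardS: "card S = K" using nK k0 Kk0 by (simp add: S_def)
    define z where "z = (\<Sum>i\<in>S1. jH \<sigma> H n i)"
    have zZ: "\<bar>z\<bar> \<le> Z"
    proof -
      have "0 \<le> z" unfolding z_def by (intro sum_nonneg wnn)
      moreover have "z \<le> (\<Sum>i\<in>S1. c * D * Wt H (n - i))"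
        unfolding z_def by (intro sum_mono wub) (use lo_le Kk0 k0 nK in \<open>auto simp: S1_def\<close>)
      moreover have "(\<Sum>i\<in>S1. c * D * Wt H (n - i)) = Z"
        unfolding S1_def Z_def using sum_reflect[of "k0 - 1" n 1 "\<lambda>k. c * D * Wt H k"] k0 nK Kk0 by simp
      ultimately show ?thesis by simp
    qed
    have S2big: "Z \<le> (\<Sum>i\<in>S2. jH \<sigma> H n i)"
    proof -
      have "(\<Sum>k=k0..K1. f k) \<le> (\<Sum>k=k0..K. f k)" using f0 by (intro sum_mono2) (auto simp: K_def)
      also have "\<dots> = (\<Sum>i=n-K..n-k0. f (n - i))" using sum_reflect[of K n k0 f] Kk0 nK by simp
      finally have "c / 2 * (\<Sum>k=k0..K1. f k) \<le> c / 2 * (\<Sum>i\<in>S2. f (n - i))"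
        using c unfolding S2eq by (intro mult_left_mono) auto
      also have "\<dots> = (\<Sum>i\<in>S2. c * ((1/2) * f (n - i)))" by (simp add: sum_distrib_left)
      also have "\<dots> \<le> (\<Sum>i\<in>S2. jH \<sigma> H n i)"
        by (intro sum_mono wlb) (use nK Kk0 k0 in \<open>auto simp: S2eq\<close>)
      finally show ?thesis using sumK1 by linarith
    qed
    have S2u: "\<forall>i\<in>{n-K..<n-K+(K-k0+1)}. 0 \<le> jH \<sigma> H n i \<and> jH \<sigma> H n i \<le> u"
    proof
      fix i assume "i \<in> {n-K..<n-K+(K-k0+1)}"
      then have i: "i \<in> S2" by (simp add: S2_def)
      then have "lo \<le> i" "i < n" "k0 \<le> n - i" using lo_le nK Kk0 k0 by (auto simp: S2eq)
      then have "jH \<sigma> H n i \<le> c * D * Wt H (n - i)" "c * D * Wt H (n - i) \<le> u"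
        by (auto intro: wub wsmall)
      then show "0 \<le> jH \<sigma> H n i \<and> jH \<sigma> H n i \<le> u" using wnn[of i] by linarith
    qed
    obtain s where s: "\<forall>k. s k = 1 \<or> s k = -1" "\<bar>z + (\<Sum>i=n-K..<n-K+(K-k0+1). s i * jH \<sigma> H n i)\<bar> \<le> u"
    proof -
      have zz: "\<bar>z\<bar> \<le> (\<Sum>k=n-K..<n-K+(K-k0+1). jH \<sigma> H n k) + u"
        using zZ S2big u unfolding S2_def by linarith
      from greedy[OF S2u zz] show ?thesis using that by blast
    qed
    define sp where "sp i = (if i \<in> S1 then 1 else s i)" for i
    have sp: "\<forall>i. sp i = 1 \<or> sp i = -1" using s(1) by (simp add: sp_def)
    have Aeq: "(\<Sum>i\<in>S. jH \<sigma> H n i * \<xi> i \<omega>) = z + (\<Sum>i=n-K..<n-K+(K-k0+1). s i * jH \<sigma> H n i)"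
      if "\<forall>i\<in>S. \<xi> i \<omega> = sp i" for \<omega>
    proof -
      have "(\<Sum>i\<in>S. jH \<sigma> H n i * \<xi> i \<omega>) = (\<Sum>i\<in>S1. jH \<sigma> H n i * \<xi> i \<omega>) + (\<Sum>i\<in>S2. jH \<sigma> H n i * \<xi> i \<omega>)"
        unfolding S12(1) by (rule sum.union_disjoint) (use S12(2) in \<open>auto simp: S1_def S2_def\<close>)
      also have "(\<Sum>i\<in>S1. jH \<sigma> H n i * \<xi> i \<omega>) = z"
        unfolding z_def using that S12 by (intro sum.cong) (auto simp: sp_def)
      also have "(\<Sum>i\<in>S2. jH \<sigma> H n i * \<xi> i \<omega>) = (\<Sum>i=n-K..<n-K+(K-k0+1). s i * jH \<sigma> H n i)"
        unfolding S2_def[symmetric] using that S12 by (intro sum.cong) (auto simp: sp_def)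
      finally show ?thesis .
    qed
    define R where "R = {lo..n-1} - S"
    have finR: "finite R" and disj: "S \<inter> R = {}" by (auto simp: R_def)
    have Ysplit: "Yhat \<sigma> H \<xi> n \<omega> = (\<Sum>i\<in>S. jH \<sigma> H n i * \<xi> i \<omega>) + (\<Sum>i\<in>R. jH \<sigma> H n i * \<xi> i \<omega>)" for \<omega>
      unfolding Yhat_def lo_def[symmetric] R_def
      using sum.subset_diff[OF SR finite_atLeastAtMost, of "\<lambda>i. jH \<sigma> H n i * \<xi> i \<omega>"] by (simp add: add.commute)
    have Rvar: "(\<Sum>i\<in>R. (jH \<sigma> H n i)^2) \<le> u^2 / 2"
    proof -
      have Ri: "lo \<le> i \<and> i < n - K" if "i \<in> R" for i using that k0 Kk0 nK by (auto simp: R_def S_def)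
      have "(\<Sum>i\<in>R. (jH \<sigma> H n i)^2) \<le> (\<Sum>i\<in>R. (c * D)^2 * real (n - i - 1) powr (2*H - 3))"
      proof (rule sum_mono)
        fix i assume i: "i \<in> R"
        then have ii: "lo \<le> i" "i < n - K" using Ri by auto
        have ne1: "n - i \<noteq> 1" using ii k0 Kk0 by auto
        have "jH \<sigma> H n i \<le> c * D * Wt H (n - i)" using ii by (intro wub) auto
        then have "(jH \<sigma> H n i)^2 \<le> (c * D * Wt H (n - i))^2" using wnn[of i] by (intro power_mono) auto
        also have "\<dots> = (c * D)^2 * ((real (n - i) - 1) powr (H - 3/2))^2" using ne1
          by (simp add: Wt_def power_mult_distrib)
        also have "((real (n - i) - 1) powr (H - 3/2))^2 = real (n - i - 1) powr (2*H - 3)"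
        proof -
          have e1: "real (n - i) - 1 = real (n - i - 1)" using ii by simp
          have e2: "(x powr (H - 3/2))^2 = x powr (2*H - 3)" for x :: real
            by (simp add: power2_eq_square powr_add[symmetric])
          show ?thesis by (simp only: e2 e1)
        qed
        finally show "(jH \<sigma> H n i)^2 \<le> (c * D)^2 * real (n - i - 1) powr (2*H - 3)" .
      qed
      also have "\<dots> = (c * D)^2 * (\<Sum>i\<in>R. real (n - i - 1) powr (2*H - 3))" by (simp add: sum_distrib_left)
      also have "(\<Sum>i\<in>R. real (n - i - 1) powr (2*H - 3)) = (\<Sum>j\<in>(\<lambda>i. n - i - 1) ` R. real j powr (2*H - 3))"
      proof -
        have "inj_on (\<lambda>i. n - i - 1) R"
        proof (rule inj_onI)
          fix x y assume xy: "x \<in> R" "y \<in> R" "n - x - 1 = n - y - 1"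
          then show "x = y" using Ri[of x] Ri[of y] by arith
        qed
        then show ?thesis by (simp add: sum.reindex)
      qed
      also have "\<dots> \<le> \<epsilon>"
      proof (rule K2)
        show "finite ((\<lambda>i. n - i - 1) ` R)" using finR by simp
        show "(\<lambda>i. n - i - 1) ` R \<subseteq> {K2..}"
        proof
          fix j assume "j \<in> (\<lambda>i. n - i - 1) ` R"
          then obtain i where "i \<in> R" "j = n - i - 1" by auto
          moreover have "K2 \<le> K" by (simp add: K_def)
          ultimately show "j \<in> {K2..}" using Ri[of i] by auto
        qed
      qed
      finally have "(\<Sum>i\<in>R. (jH \<sigma> H n i)^2) \<le> (c * D)^2 * \<epsilon>"
        using c D by (simp add: mult_left_mono)
      also have "\<dots> = u^2 / 2" using c D by (simp add: \<epsilon>_def)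
      finally show ?thesis .
    qed
    define Bv where "Bv \<omega> = (\<Sum>i\<in>R. jH \<sigma> H n i * \<xi> i \<omega>)" for \<omega>
    have Bev: "{\<omega> \<in> space M. Bv \<omega> \<in> Q} \<in> events" if "Q \<in> sets borel" for Q
      unfolding Bv_def by (rule events_B[OF that])
    have cb: "prob {\<omega> \<in> space M. u \<le> \<bar>Bv \<omega>\<bar>} \<le> 1/2"
    proof -
      have "prob {\<omega> \<in> space M. u \<le> \<bar>Bv \<omega>\<bar>} \<le> (\<Sum>i\<in>R. (jH \<sigma> H n i)^2) / u^2"
        unfolding Bv_def by (rule cheb[OF finR u])
      also have "\<dots> \<le> (u^2 / 2) / u^2" using Rvar u by (intro divide_right_mono) auto
      also have "\<dots> = 1/2" using u by simp
      finally show ?thesis .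
    qed
    have B1: "{\<omega> \<in> space M. Bv \<omega> \<in> {x. \<bar>x\<bar> < u}} \<in> events" by (rule Bev) measurable
    have B2: "{\<omega> \<in> space M. Bv \<omega> \<in> {x. u \<le> \<bar>x\<bar>}} \<in> events" by (rule Bev) measurable
    have pB: "1/2 \<le> prob {\<omega> \<in> space M. Bv \<omega> \<in> {x. \<bar>x\<bar> < u}}"
    proof -
      have "prob {\<omega> \<in> space M. Bv \<omega> \<in> {x. \<bar>x\<bar> < u}} + prob {\<omega> \<in> space M. Bv \<omega> \<in> {x. u \<le> \<bar>x\<bar>}}
          = prob ({\<omega> \<in> space M. Bv \<omega> \<in> {x. \<bar>x\<bar> < u}} \<union> {\<omega> \<in> space M. Bv \<omega> \<in> {x. u \<le> \<bar>x\<bar>}})"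
        by (rule finite_measure_Union[OF B1 B2, symmetric]) auto
      also have "({\<omega> \<in> space M. Bv \<omega> \<in> {x. \<bar>x\<bar> < u}} \<union> {\<omega> \<in> space M. Bv \<omega> \<in> {x. u \<le> \<bar>x\<bar>}}) = space M" by auto
      finally show ?thesis using cb prob_space by simp
    qed
    define T where "T = {\<omega> \<in> space M. (\<forall>i\<in>S. \<xi> i \<omega> = sp i) \<and> Bv \<omega> \<in> {x. \<bar>x\<bar> < u}}"
    define E where "E = {\<omega> \<in> space M. \<bar>Yhat \<sigma> H \<xi> n \<omega>\<bar> \<le> gH \<sigma> H n * (1 - 1/2)}"
    have Eev: "E \<in> events"
    proof -
      have "{x::real. \<bar>x\<bar> \<le> gH \<sigma> H n * (1 - 1/2)} \<in> sets borel" by measurable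
      from events_Y[OF this, of \<sigma> H n] show ?thesis by (simp add: E_def)
    qed
    have glb: "c * (1/4) \<le> gH \<sigma> H n"
      unfolding gH_eq c_def[symmetric] using g_bounds(1)[OF H n2] c by (intro mult_left_mono) auto
    have TE: "T \<subseteq> E"
    proof
      fix \<omega> assume "\<omega> \<in> T"
      then have w: "\<omega> \<in> space M" "\<forall>i\<in>S. \<xi> i \<omega> = sp i" "\<bar>Bv \<omega>\<bar> < u" by (auto simp: T_def)
      have "\<bar>Yhat \<sigma> H \<xi> n \<omega>\<bar> \<le> \<bar>z + (\<Sum>i=n-K..<n-K+(K-k0+1). s i * jH \<sigma> H n i)\<bar> + \<bar>Bv \<omega>\<bar>"
        unfolding Ysplit Aeq[OF w(2)] Bv_def by (rule abs_triangle_ineq)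
      also have "\<dots> \<le> u + u" using s(2) w(3) by simp
      also have "\<dots> \<le> gH \<sigma> H n * (1 - 1/2)" using glb by (simp add: u_def)
      finally show "\<omega> \<in> E" using w(1) by (simp add: E_def)
    qed
    have "prob T = (1/2)^card S * prob {\<omega> \<in> space M. Bv \<omega> \<in> {x. \<bar>x\<bar> < u}}"
      unfolding T_def Bv_def
      by (subst block[OF finS finR disj]) (simp_all add: pattern[OF finS sp])
    then have "(1/2::real)^K / 2 \<le> prob T" using pB cardS by (simp add: mult_le_cancel_left1)
    also have "\<dots> \<le> prob E" using TE Eev by (intro finite_measure_mono) auto
    finally show "(1/2::real)^K / 2 \<le> prob {\<omega> \<in> space M. \<bar>Yhat \<sigma> H \<xi> n \<omega>\<bar> \<le> gH \<sigma> H n * (1 - 1/2)}"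
      by (simp add: E_def)
  qed
qed

end




lemma (in rad) lo_inf:
  fixes nk :: "nat \<Rightarrow> nat"
  assumes H: "1/2 < H" "H < 1" and nk: "\<And>k. k \<le> nk k"
  shows "\<exists>k0. \<forall>k\<ge>k0. m \<le> iH H (nk k)"
proof -
  define k0 where "k0 = max 2 (nat \<lceil>(real m + 1) / (H - 1/2)\<rceil>)"
  show ?thesis
  proof (intro exI allI impI)
    fix k assume k: "k0 \<le> k"
    then have n: "k0 \<le> nk k" using nk[of k] by linarith
    then have n2: "2 \<le> nk k" by (simp add: k0_def)
    have "(real m + 1) / (H - 1/2) \<le> real (nat \<lceil>(real m + 1) / (H - 1/2)\<rceil>)" by (rule real_nat_ceiling_ge)
    also have "\<dots> \<le> real (nk k)" using n by (simp add: k0_def)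
    finally have "real m + 1 \<le> (H - 1/2) * real (nk k)" using H by (simp add: field_simps)
    then have "real m \<le> real (iH H (nk k))" using iH_bounds(1)[OF H n2] by linarith
    then show "m \<le> iH H (nk k)" by simp
  qed
qed

theorem lemma6p2:
  fixes M :: "'a measure" and \<xi> :: "nat \<Rightarrow> 'a \<Rightarrow> real"
    and \<sigma> hc :: real and nk :: "nat \<Rightarrow> nat"
  assumes "prob_space M"
    and "prob_space.indep_vars M (\<lambda>_. borel) \<xi> UNIV"
    and "\<And>i. measure M {\<omega> \<in> space M. \<xi> i \<omega> = 1} = 1/2"
    and "\<And>i. measure M {\<omega> \<in> space M. \<xi> i \<omega> = -1} = 1/2"
    and "is_hc hc"
    and "\<sigma> > 0"
    and "strict_mono nk" and "\<And>k. nk k > 0"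
  shows "(\<forall>H. 1/2 < H \<and> H < 2*hc - 1/2 \<longrightarrow>
            (\<exists>\<epsilon>>0. measure M {\<omega> \<in> space M. \<exists>m. \<forall>k\<ge>m.
                 \<bar>Yhat \<sigma> H \<xi> (nk k) \<omega>\<bar> > gH \<sigma> H (nk k) * (1 - \<epsilon>)} = 0))
       \<and> (\<forall>H. 2*hc - 1/2 < H \<and> H < 1 \<longrightarrow>
            (\<exists>\<delta>>0. measure M {\<omega> \<in> space M. \<forall>m. \<exists>k\<ge>m.
                 \<bar>Yhat \<sigma> H \<xi> (nk k) \<omega>\<bar> > gH \<sigma> H (nk k) * (1 + \<delta>)} = 1))"
proof -
  interpret rad M \<xi>
    unfolding rad_def rad_axioms_def using assms(1-4) by auto
  have hc: "hc < 3/4" using assms(5) by (simp add: is_hc_def)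
  have nk: "k \<le> nk k" for k using seq_suble[OF assms(7)] .
  have sg: "0 < \<sigma>" using assms(6) .
  have tailQ: "{\<omega> \<in> space M. Yhat \<sigma> H \<xi> (nk k) \<omega> \<in> Q} \<in> sigma_sets (space M) (\<Union> (Asig ` {m..}))"
    if "m \<le> iH H (nk k)" "Q \<in> sets borel" for H k m Q
    by (rule Y_tail_set[OF that])
  have P1: "\<exists>\<epsilon>>0. prob {\<omega> \<in> space M. \<exists>m. \<forall>k\<ge>m.
                 \<bar>Yhat \<sigma> H \<xi> (nk k) \<omega>\<bar> > gH \<sigma> H (nk k) * (1 - \<epsilon>)} = 0"
    if H: "1/2 < H" "H < 1" for H
  proof (intro exI conjI)
    show "(0::real) < 1/2" by simp
    obtain N0 q where q: "0 < q" "\<And>n. N0 \<le> n \<Longrightarrow> q \<le> prob {\<omega> \<in> space M. \<bar>Yhat \<sigma> H \<xi> n \<omega>\<bar> \<le> gH \<sigma> H n * (1 - 1/2)}"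
      using part1_prob[OF H sg] by blast
    have io: "prob {\<omega> \<in> space M. \<forall>m. \<exists>k\<ge>m. \<bar>Yhat \<sigma> H \<xi> (nk k) \<omega>\<bar> \<le> gH \<sigma> H (nk k) * (1 - 1/2)} = 1"
    proof (rule io_one[where lo="\<lambda>k. iH H (nk k)" and ?k1.0=N0 and c=q])
      show "\<exists>k0. \<forall>k\<ge>k0. m \<le> iH H (nk k)" for m by (rule lo_inf[OF H nk])
      show "{\<omega> \<in> space M. \<bar>Yhat \<sigma> H \<xi> (nk k) \<omega>\<bar> \<le> gH \<sigma> H (nk k) * (1 - 1/2)} \<in> sigma_sets (space M) (\<Union> (Asig ` {m..}))"
        if "m \<le> iH H (nk k)" for k m
      proof -
        have "{x::real. \<bar>x\<bar> \<le> gH \<sigma> H (nk k) * (1 - 1/2)} \<in> sets borel" by measurable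
        from tailQ[OF that this] show ?thesis by simp
      qed
      show "q \<le> prob {\<omega> \<in> space M. \<bar>Yhat \<sigma> H \<xi> (nk k) \<omega>\<bar> \<le> gH \<sigma> H (nk k) * (1 - 1/2)}"
        if "N0 \<le> k" for k using q(2)[of "nk k"] nk[of k] that by simp
    qed (use q in auto)
    define ioD where "ioD = {\<omega> \<in> space M. \<forall>m. \<exists>k\<ge>m. \<bar>Yhat \<sigma> H \<xi> (nk k) \<omega>\<bar> \<le> gH \<sigma> H (nk k) * (1 - 1/2)}"
    have io': "prob ioD = 1" unfolding ioD_def by (rule io)
    have ioDev: "ioD \<in> events"
    proof (rule ccontr)
      assume "ioD \<notin> events"
      then have "prob ioD = 0" by (rule measure_notin_sets)
      then show False using io' by linarith
    qed
    have cev: "space M - ioD \<in> events" by (rule sets.Diff[OF sets.top ioDev])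
    have sub: "{\<omega> \<in> space M. \<exists>m. \<forall>k\<ge>m. \<bar>Yhat \<sigma> H \<xi> (nk k) \<omega>\<bar> > gH \<sigma> H (nk k) * (1 - 1/2)} \<subseteq> space M - ioD"
    proof
      fix \<omega> assume "\<omega> \<in> {\<omega> \<in> space M. \<exists>m. \<forall>k\<ge>m. \<bar>Yhat \<sigma> H \<xi> (nk k) \<omega>\<bar> > gH \<sigma> H (nk k) * (1 - 1/2)}"
      then obtain m where w: "\<omega> \<in> space M" "\<And>k. k \<ge> m \<Longrightarrow> \<bar>Yhat \<sigma> H \<xi> (nk k) \<omega>\<bar> > gH \<sigma> H (nk k) * (1 - 1/2)"
        by auto
      have "\<omega> \<notin> ioD"
      proof
        assume "\<omega> \<in> ioD"
        then obtain k where "k \<ge> m" "\<bar>Yhat \<sigma> H \<xi> (nk k) \<omega>\<bar> \<le> gH \<sigma> H (nk k) * (1 - 1/2)"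
          unfolding ioD_def by blast
        then show False using w(2)[of k] by linarith
      qed
      then show "\<omega> \<in> space M - ioD" using w(1) by blast
    qed
    have "prob {\<omega> \<in> space M. \<exists>m. \<forall>k\<ge>m. \<bar>Yhat \<sigma> H \<xi> (nk k) \<omega>\<bar> > gH \<sigma> H (nk k) * (1 - 1/2)} \<le> prob (space M - ioD)"
      by (rule finite_measure_mono[OF sub cev])
    also have "\<dots> = 0" using prob_compl[OF ioDev] io' by simp
    finally show "prob {\<omega> \<in> space M. \<exists>m. \<forall>k\<ge>m. \<bar>Yhat \<sigma> H \<xi> (nk k) \<omega>\<bar> > gH \<sigma> H (nk k) * (1 - 1/2)} = 0"
      by (simp add: measure_le_0_iff)
  qed
  have P2: "\<exists>\<delta>>0. prob {\<omega> \<in> space M. \<forall>m. \<exists>k\<ge>m.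
                 \<bar>Yhat \<sigma> H \<xi> (nk k) \<omega>\<bar> > gH \<sigma> H (nk k) * (1 + \<delta>)} = 1"
    if H: "1/2 < H" "H < 1" for H
  proof (intro exI conjI)
    show "(0::real) < 1" by simp
    obtain N0 q where q: "0 < q" "\<And>n. N0 \<le> n \<Longrightarrow> q \<le> prob {\<omega> \<in> space M. gH \<sigma> H n * (1 + 1) < \<bar>Yhat \<sigma> H \<xi> n \<omega>\<bar>}"
      using part2_prob[OF H sg] by blast
    show "prob {\<omega> \<in> space M. \<forall>m. \<exists>k\<ge>m. \<bar>Yhat \<sigma> H \<xi> (nk k) \<omega>\<bar> > gH \<sigma> H (nk k) * (1 + 1)} = 1"
    proof (rule io_one[where lo="\<lambda>k. iH H (nk k)" and ?k1.0=N0 and c=q])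
      show "\<exists>k0. \<forall>k\<ge>k0. m \<le> iH H (nk k)" for m by (rule lo_inf[OF H nk])
      show "{\<omega> \<in> space M. gH \<sigma> H (nk k) * (1 + 1) < \<bar>Yhat \<sigma> H \<xi> (nk k) \<omega>\<bar>} \<in> sigma_sets (space M) (\<Union> (Asig ` {m..}))"
        if "m \<le> iH H (nk k)" for k m
      proof -
        have "{x::real. gH \<sigma> H (nk k) * (1 + 1) < \<bar>x\<bar>} \<in> sets borel" by measurable
        from tailQ[OF that this] show ?thesis by simp
      qed
      show "q \<le> prob {\<omega> \<in> space M. gH \<sigma> H (nk k) * (1 + 1) < \<bar>Yhat \<sigma> H \<xi> (nk k) \<omega>\<bar>}"
        if "N0 \<le> k" for k using q(2)[of "nk k"] nk[of k] that by simp
    qed (use q in auto)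
  qed
  show ?thesis
  proof (intro conjI allI impI)
    fix H assume "1/2 < H \<and> H < 2*hc - 1/2"
    then show "\<exists>\<epsilon>>0. measure M {\<omega> \<in> space M. \<exists>m. \<forall>k\<ge>m.
                 \<bar>Yhat \<sigma> H \<xi> (nk k) \<omega>\<bar> > gH \<sigma> H (nk k) * (1 - \<epsilon>)} = 0"
    proof -
      have "H < 1" using \<open>1/2 < H \<and> H < 2*hc - 1/2\<close> hc by linarith
      then show ?thesis using P1[of H] \<open>1/2 < H \<and> H < 2*hc - 1/2\<close> by blast
    qed
  next
    fix H assume A: "2*hc - 1/2 < H \<and> H < 1"
    have "1/2 < hc" using assms(5) by (simp add: is_hc_def)
    then have "1/2 < H" "H < 1" using A by linarith+
    then show "\<exists>\<delta>>0. measure M {\<omega> \<in> space M. \<forall>m. \<exists>k\<ge>m.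
                 \<bar>Yhat \<sigma> H \<xi> (nk k) \<omega>\<bar> > gH \<sigma> H (nk k) * (1 + \<delta>)} = 1"
      using P2[of H] by blast
  qed
qed



end
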